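(* Let $f\in K[x]$, $Q<R$ in $\mathcal Q$ and $d=\deg_Qf$. Then $\nu(f_{Q,d}-f_{R,d})>\nu(f_{Q,d})$ (in particular $\nu(f_{Q,d})=\nu(f_{R,d})$), $d=\max\{j:\nu_Q(f_{R,j}R^j)=\nu_Q(f)\}$, and $\deg_Rf\le d$.
   Context: Let $(K,v)$ be a valued field, $\Gamma$ the divisible hull of $vK$, embedded in a divisible ordered abelian group $\Lambda$. Let $\nu\colon K[x]\to\Lambda\cup\{\infty\}$ be a valuation extending $v$ which is well-specified, i.e. it is not the case that simultaneously $\nu^{-1}(\infty)=0$, the value group of $\nu$ modulo $\Gamma$ is torsion, and the residue field of $\nu$ is algebraic over that of $v$. For $s\ge0$ let $\partial_s$ be the $s$-th Hasse–Schmidt derivative, defined by $f(x+y)=\sum_{s\ge0}(\partial_sf)y^s$. For nonconstant $f$ with $\nu(f)<\infty$ the level is $\epsilon_\nu(f)=\max\{(\nu(f)-\nu(\partial_sf))/s: s\ge1\}$; $\epsilon_\nu(a)=-\infty$ for $a\in K$. A monic $Q\in K[x]$ is a key polynomial for $\nu$ if $\epsilon_\nu(f)<\epsilon_\nu(Q)$ whenever $\deg f<\deg Q$. For monic $Q$, each $f$ has a unique $Q$-expansion $f=\sum_{i\ge0}f_{Q,i}Q^i$ with $\deg f_{Q,i}<\deg Q$; set $\nu_Q(f)=\min_i\nu(f_{Q,i}Q^i)$ (a valuation with $\nu_Q\le\nu$ for key polynomials $Q$), $S_Q(f)=\{i:\nu(f_{Q,i}Q^i)=\nu_Q(f)\}$,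 $\deg_Qf=\max S_Q(f)$. Fix $m\ge1$ such that the set $\Psi_m$ of key polynomials of degree $m$ for $\nu$ is nonempty and has no element of maximal $\nu$-value. Let $\mathcal Q\subseteq\Psi_m$ be well-ordered by $Q<R\iff\nu(Q)<\nu(R)$ and cofinal in $\Psi_m$ for $\nu$-values. As in the paper, all values $\nu_Q(f)$ ($f\ne0$) lie in $\Gamma$. *)

theory Defs
  imports "HOL-Computational_Algebra.Polynomial" "HOL-Library.Extended"
begin

text \<open>Values live in 'b extended: Fin g for g in Lambda, Pinf for infinity.
  Minf is only used as the level of constants (minus infinity).\<close>

definition nsm :: "nat \<Rightarrow> 'b::ab_group_add \<Rightarrow> 'b" where
  "nsm n g = (\<Sum>i<n. g)"

text \<open>Division by a positive integer in a divisible torsion-free group.\<close>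
definition divn :: "nat \<Rightarrow> 'b::ab_group_add \<Rightarrow> 'b" where
  "divn n g = (THE h. nsm n h = g)"

definition fin_val :: "'b extended \<Rightarrow> 'b" where
  "fin_val e = (case e of Fin b \<Rightarrow> b)"

definition is_field_valuation :: "('a::field \<Rightarrow> 'b::linordered_ab_group_add extended) \<Rightarrow> bool" where
  "is_field_valuation v \<longleftrightarrow> v 0 = Pinf \<and> (\<forall>c. c \<noteq> 0 \<longrightarrow> (\<exists>b. v c = Fin b))
     \<and> (\<forall>a b. v (a * b) = v a + v b) \<and> (\<forall>a b. min (v a) (v b) \<le> v (a + b))"

definition is_poly_valuation :: "('a::field poly \<Rightarrow> 'b::linordered_ab_group_add extended) \<Rightarrow> bool" where
  "is_poly_valuation \<nu> \<longleftrightarrow> \<nu> 0 = Pinf \<and> \<nu> 1 = Fin 0 \<and> (\<forall>f. \<nu> f \<noteq> Minf)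
     \<and> (\<forall>f g. \<nu> (f * g) = \<nu> f + \<nu> g) \<and> (\<forall>f g. min (\<nu> f) (\<nu> g) \<le> \<nu> (f + g))"

definition extends_val :: "('a::field poly \<Rightarrow> 'b extended) \<Rightarrow> ('a \<Rightarrow> 'b extended) \<Rightarrow> bool" where
  "extends_val \<nu> v \<longleftrightarrow> (\<forall>c. \<nu> [:c:] = v c)"

definition value_group :: "('a::field \<Rightarrow> 'b::linordered_ab_group_add extended) \<Rightarrow> 'b set" where
  "value_group v = {b. \<exists>c. c \<noteq> 0 \<and> v c = Fin b}"

definition div_hull :: "('a::field \<Rightarrow> 'b::linordered_ab_group_add extended) \<Rightarrow> 'b set" where
  "div_hull v = {g. \<exists>n>0. nsm n g \<in> value_group v}"

text \<open>Well-specified: not (trivial support, value group of nu torsion mod Gamma,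
  residue field of nu algebraic over that of v).  When the support is trivial,
  nu extends to K(x): its value group consists of the differences nu f - nu g, and
  its residue field consists of the residues of f/g with nu g <= nu f; such a
  residue is algebraic over k_v iff some polynomial sum a_i T^i with v(a_i) >= 0
  and some v(a_i) = 0 (nonzero reduction) vanishes on it, i.e.
  nu (sum a_i f^i g^(n-i)) > nu (g^n).\<close>
definition well_specified :: "('a::field \<Rightarrow> 'b::linordered_ab_group_add extended)
    \<Rightarrow> ('a poly \<Rightarrow> 'b extended) \<Rightarrow> bool" where
  "well_specified v \<nu> \<longleftrightarrow> \<not> (
      (\<forall>f. \<nu> f = Pinf \<longrightarrow> f = 0)
    \<and> (\<forall>f g. f \<noteq> 0 \<longrightarrow> g \<noteq> 0 \<longrightarrow>
          (\<exists>n>0. nsm n (fin_val (\<nu> f) - fin_val (\<nu> g)) \<in> div_hull v))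
    \<and> (\<forall>f g. g \<noteq> 0 \<longrightarrow> \<nu> g \<le> \<nu> f \<longrightarrow>
          (\<exists>n a. (\<forall>i\<le>n. Fin 0 \<le> v (a i)) \<and> (\<exists>i\<le>n. v (a i) = Fin 0)
             \<and> \<nu> (g ^ n) < \<nu> (\<Sum>i\<le>n. smult (a i) (f ^ i * g ^ (n - i))))))"

text \<open>Hasse--Schmidt derivative: f(x+y) = sum_s (hasse s f) y^s.\<close>
definition hasse :: "nat \<Rightarrow> 'a::field poly \<Rightarrow> 'a poly" where
  "hasse s f = coeff (pcompose (map_poly (\<lambda>c. [:c:]) f) [:[:0, 1:], 1:]) s"

text \<open>Level epsilon. Constants get -infinity; for nu f = infinity (not covered by
  the paper's definition) we set infinity.\<close>
definition level :: "('a::field poly \<Rightarrow> 'b::linordered_ab_group_add extended) \<Rightarrow> 'a poly \<Rightarrow> 'b extended" where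
  "level \<nu> f = (if degree f = 0 then Minf
     else if \<nu> f = Pinf then Pinf
     else Max ((\<lambda>s. case \<nu> (hasse s f) of
                      Fin b \<Rightarrow> Fin (divn s (fin_val (\<nu> f) - b))
                    | Pinf \<Rightarrow> Minf | Minf \<Rightarrow> Minf) ` {1..degree f}))"

definition key_poly :: "('a::field poly \<Rightarrow> 'b::linordered_ab_group_add extended) \<Rightarrow> 'a poly \<Rightarrow> bool" where
  "key_poly \<nu> Q \<longleftrightarrow> lead_coeff Q = 1 \<and> (\<forall>f. degree f < degree Q \<longrightarrow> level \<nu> f < level \<nu> Q)"

definition Psi :: "('a::field poly \<Rightarrow> 'b::linordered_ab_group_add extended) \<Rightarrow> nat \<Rightarrow> 'a poly set" where
  "Psi \<nu> m = {Q. key_poly \<nu> Q \<and> degree Q = m}"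

text \<open>Q-expansion coefficients: f = sum_i (qcoeff Q f i) * Q^i with degree < degree Q.\<close>
definition qcoeff :: "'a::field poly \<Rightarrow> 'a poly \<Rightarrow> nat \<Rightarrow> 'a poly" where
  "qcoeff Q f i = (f div Q ^ i) mod Q"

definition nuQ :: "('a::field poly \<Rightarrow> 'b::linordered_ab_group_add extended) \<Rightarrow> 'a poly \<Rightarrow> 'a poly \<Rightarrow> 'b extended" where
  "nuQ \<nu> Q f = Min ((\<lambda>i. \<nu> (qcoeff Q f i * Q ^ i)) ` {..degree f})"

definition SQ :: "('a::field poly \<Rightarrow> 'b::linordered_ab_group_add extended) \<Rightarrow> 'a poly \<Rightarrow> 'a poly \<Rightarrow> nat set" where
  "SQ \<nu> Q f = {i. \<nu> (qcoeff Q f i * Q ^ i) = nuQ \<nu> Q f}"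

definition degQ :: "('a::field poly \<Rightarrow> 'b::linordered_ab_group_add extended) \<Rightarrow> 'a poly \<Rightarrow> 'a poly \<Rightarrow> nat" where
  "degQ \<nu> Q f = Max (SQ \<nu> Q f)"

end

theory Submission
  imports Defs
begin

lemma nsm_0[simp]: "nsm 0 g = 0" by (simp add: nsm_def)
lemma nsm_Suc[simp]: "nsm (Suc n) g = g + nsm n g" by (simp add: nsm_def add.commute)
lemma nsm_1[simp]: "nsm 1 g = g" by simp
lemma nsm_add: "nsm (a + b) g = nsm a g + nsm b g"
  by (induction a) (simp_all add: add.assoc)
lemma nsm_plus: "nsm n (g + h) = nsm n g + nsm n (h::'b::ab_group_add)"
  by (induction n) (simp_all add: algebra_simps)
lemma nsm_zero[simp]: "nsm n (0::'b::ab_group_add) = 0"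
  by (induction n) simp_all
lemma nsm_minus: "nsm n (- g) = - nsm n (g::'b::ab_group_add)"
  by (induction n) (simp_all add: algebra_simps)
lemma nsm_diff: "nsm n (g - h) = nsm n g - nsm n (h::'b::ab_group_add)"
  using nsm_plus[of n g "-h"] nsm_minus[of n h] by simp
lemma nsm_mono: "g \<le> h \<Longrightarrow> nsm n g \<le> nsm n (h::'b::ordered_ab_group_add)"
proof (induction n)
  case (Suc n)
  then have "nsm n g \<le> nsm n h" by simp
  then show ?case using Suc.prems by (simp only: nsm_Suc) (rule add_mono)
qed simp
lemma nsm_strict_mono: "n > 0 \<Longrightarrow> g < h \<Longrightarrow> nsm n g < nsm n (h::'b::ordered_ab_group_add)"
proof (induction n)
  case (Suc n) then show ?case
  proof (cases n)
    case 0 then show ?thesis using Suc by simp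
  next
    case (Suc k)
    then have "nsm n g < nsm n h" using Suc.IH Suc.prems by simp
    then show ?thesis using Suc.prems by (simp only: nsm_Suc) (rule add_strict_mono)
  qed
qed simp
lemma nsm_mono_n: "0 \<le> g \<Longrightarrow> a \<le> b \<Longrightarrow> nsm a g \<le> nsm b (g::'b::ordered_ab_group_add)"
proof -
  assume "0 \<le> g" "a \<le> b"
  then have "b = a + (b - a)" by simp
  then obtain c where "b = a + c" by blast
  moreover have "0 \<le> nsm c g" using nsm_mono[OF \<open>0 \<le> g\<close>, of c] by simp
  ultimately show ?thesis by (simp add: nsm_add)
qed
lemma nsm_strict_mono_n: "0 < g \<Longrightarrow> a < b \<Longrightarrow> nsm a g < nsm b (g::'b::ordered_ab_group_add)"
proof -
  assume "0 < g" "a < b"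
  then have "b = a + Suc (b - a - 1)" by simp
  then obtain c where "b = a + Suc c" by blast
  moreover have "0 \<le> nsm c g" using nsm_mono[of 0 g c] \<open>0 < g\<close> by simp
  ultimately show ?thesis using \<open>0 < g\<close>
    by (simp only: nsm_add nsm_Suc) (simp add: add_pos_nonneg)
qed


lemma nsm_le_iff: "n > 0 \<Longrightarrow> nsm n g \<le> nsm n h \<longleftrightarrow> g \<le> (h::'b::linordered_ab_group_add)"
proof
  assume "n > 0" "nsm n g \<le> nsm n h"
  show "g \<le> h"
  proof (rule ccontr)
    assume "\<not> g \<le> h"
    then have "h < g" by simp
    then have "nsm n h < nsm n g" using nsm_strict_mono \<open>n > 0\<close> by blast
    with \<open>nsm n g \<le> nsm n h\<close> show False by simp
  qed
qed (rule nsm_mono)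

lemma nsm_less_iff: "n > 0 \<Longrightarrow> nsm n g < nsm n h \<longleftrightarrow> g < (h::'b::linordered_ab_group_add)"
  using nsm_le_iff[of n h g] by (metis not_le)

lemma divn_eq:
  assumes dv: "\<forall>g::'b::linordered_ab_group_add. \<forall>n>0. \<exists>h. nsm n h = g" and n: "n > 0"
  shows "nsm n (divn n x) = (x::'b)"
proof -
  have "\<exists>h. nsm n h = x" using dv[rule_format, OF n] .
  then obtain h where h: "nsm n h = x" ..
  have uniq: "h' = h" if "nsm n h' = x" for h'
  proof -
    have a: "nsm n h \<le> nsm n h'" and b: "nsm n h' \<le> nsm n h" using h that by simp_all
    have "h \<le> h'" using nsm_le_iff[OF n, of h h'] a by (rule iffD1)
    moreover have "h' \<le> h" using nsm_le_iff[OF n, of h' h] b by (rule iffD1)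
    ultimately have "h \<le> h'" "h' \<le> h" .
    then show ?thesis by (rule order.antisym[rotated])
  qed
  have "divn n x = h" unfolding divn_def
    using h uniq by (rule the_equality)
  with h show ?thesis by simp
qed

section \<open>Hasse derivatives\<close>

definition lift :: "'a::field poly \<Rightarrow> 'a poly poly" where
  "lift f = map_poly (\<lambda>c. [:c:]) f"

lemma coeff_lift: "coeff (lift f) n = [:coeff f n:]"
  by (simp add: lift_def coeff_map_poly)

lemma lift_add: "lift (f + g) = lift f + lift g"
  by (rule poly_eqI) (simp add: coeff_lift)

lemma lift_pCons: "lift (pCons a f) = pCons [:a:] (lift f)"
  by (simp add: lift_def map_poly_pCons)

lemma lift_smult: "lift (smult a f) = smult [:a:] (lift f)"
  by (rule poly_eqI) (simp add: coeff_lift)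

lemma lift_mult: "lift (f * g) = lift f * lift g"
proof (induction f rule: pCons_induct)
  case 0 then show ?case by (simp add: lift_def)
next
  case (pCons a p)
  have "lift (pCons a p * g) = lift (smult a g + pCons 0 (p * g))" by simp
  also have "\<dots> = smult [:a:] (lift g) + pCons 0 (lift p * lift g)"
    by (simp add: lift_add lift_smult pCons lift_pCons[of 0, simplified])
  also have "\<dots> = lift (pCons a p) * lift g" by (simp add: lift_pCons)
  finally show ?case .
qed

lemma degree_lift: "degree (lift f) = degree f"
  by (simp add: lift_def degree_map_poly)

definition XY :: "'a::field poly poly" where "XY = [:[:0, 1:], 1:]"

lemma hasse_def': "hasse s f = coeff (pcompose (lift f) XY) s"
  by (simp add: hasse_def lift_def XY_def)

lemma hasse_add: "hasse s (f + g) = hasse s f + hasse s g"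
  by (simp add: hasse_def' lift_add pcompose_add)

lemma hasse_mult: "hasse s (f * g) = (\<Sum>i\<le>s. hasse i f * hasse (s - i) g)"
  by (simp add: hasse_def' lift_mult pcompose_mult coeff_mult)

lemma hasse_zero[simp]: "hasse s 0 = 0"
  by (simp add: hasse_def' lift_def)

lemma hasse_beyond: "degree f < s \<Longrightarrow> hasse s f = 0"
proof -
  assume "degree f < s"
  moreover have "degree (pcompose (lift f) XY) \<le> degree f"
    using degree_pcompose_le[of "lift f" XY] by (simp add: degree_lift XY_def)
  ultimately show ?thesis by (simp add: hasse_def' coeff_eq_0)
qed

lemma hasse_0: "hasse 0 f = f"
proof (induction f rule: pCons_induct)
  case 0 then show ?case by simp
next
  case (pCons a p)
  have "hasse 0 (pCons a p) = [:a:] + coeff XY 0 * hasse 0 p"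
    by (simp add: hasse_def' lift_pCons pcompose_pCons coeff_mult)
  also have "\<dots> = [:a:] + [:0, 1:] * p" using pCons by (simp add: XY_def)
  also have "\<dots> = pCons a p" by (simp add: poly_eq_iff coeff_pCons split: nat.split)
  finally show ?case .
qed


lemma ext_add_le_cancel: "x + Fin c \<le> y + Fin c \<longleftrightarrow> x \<le> (y::'b::linordered_ab_group_add extended)"
  by (cases x; cases y) simp_all

lemma ext_add_less_cancel: "x + Fin c < y + Fin c \<longleftrightarrow> x < (y::'b::linordered_ab_group_add extended)"
  by (cases x; cases y) simp_all

lemma ext_add_le_cancel': "Fin c + x \<le> Fin c + y \<longleftrightarrow> x \<le> (y::'b::linordered_ab_group_add extended)"
  by (cases x; cases y) simp_all

lemma ext_add_less_cancel': "Fin c + x < Fin c + y \<longleftrightarrow> x < (y::'b::linordered_ab_group_add extended)"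
  by (cases x; cases y) simp_all

lemma double_eq_0: "(c::'b::linordered_ab_group_add) + c = 0 \<Longrightarrow> c = 0"
proof (rule ccontr)
  assume a: "c + c = 0" "c \<noteq> 0"
  show False
  proof (cases "c < 0")
    case True then have "c + c < 0" using add_neg_neg by blast
    with a show False by simp
  next
    case False then have "0 < c" using a by simp
    then have "0 < c + c" using add_pos_pos by blast
    with a show False by simp
  qed
qed

section \<open>Polynomial valuations\<close>

locale pval =
  fixes \<nu> :: "'a::field poly \<Rightarrow> 'b::linordered_ab_group_add extended"
  assumes nu0: "\<nu> 0 = Pinf" and nu1: "\<nu> 1 = Fin 0" and nu_nm: "\<nu> f \<noteq> Minf"
    and nu_mult: "\<nu> (f * g) = \<nu> f + \<nu> g" and nu_add: "min (\<nu> f) (\<nu> g) \<le> \<nu> (f + g)"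
begin

lemma nu_neg1: "\<nu> (-1) = Fin 0"
proof -
  have "\<nu> (-1) + \<nu> (-1) = Fin 0" using nu_mult[of "-1" "-1"] nu1 by simp
  moreover have "\<nu> (-1) \<noteq> Minf" by (rule nu_nm)
  ultimately show ?thesis
    by (cases "\<nu> (-1)") (auto intro: double_eq_0)
qed

lemma nu_uminus[simp]: "\<nu> (- f) = \<nu> f"
proof -
  have "\<nu> (- f) = \<nu> (-1) + \<nu> f" using nu_mult[of "-1" f] by simp
  also have "\<dots> = \<nu> f" using nu_neg1 by (cases "\<nu> f") (simp_all add: nu_nm)
  finally show ?thesis .
qed

lemma nu_diff_comm: "\<nu> (f - g) = \<nu> (g - f)"
proof -
  have "\<nu> (f - g) = \<nu> (-(f - g))" by (rule nu_uminus[symmetric])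
  also have "-(f - g) = g - f" by simp
  finally show ?thesis .
qed

lemma nu_diff: "min (\<nu> f) (\<nu> g) \<le> \<nu> (f - g)"
  using nu_add[of f "- g"] by simp

lemma nu_add_eq: assumes "\<nu> f < \<nu> g" shows "\<nu> (f + g) = \<nu> f"
proof -
  have 1: "\<nu> f \<le> \<nu> (f + g)" using nu_add[of f g] assms by simp
  have m: "min (\<nu> (f + g)) (\<nu> g) \<le> \<nu> f" using nu_add[of "f + g" "- g"] by simp
  have "\<nu> (f + g) \<le> \<nu> f"
  proof (rule ccontr)
    assume "\<not> \<nu> (f + g) \<le> \<nu> f"
    then have a: "\<nu> f < \<nu> (f + g)" using assms by simp
    from m have "\<nu> (f+g) \<le> \<nu> f \<or> \<nu> g \<le> \<nu> f" by (simp only: min_le_iff_disj)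
    then show False
    proof
      assume "\<nu> (f+g) \<le> \<nu> f" then show False using a by (simp add: leD)
    next
      assume "\<nu> g \<le> \<nu> f" then show False using assms by (simp add: leD)
    qed
  qed
  with 1 show ?thesis by simp
qed

lemma nu_add_eq': assumes "\<nu> g < \<nu> f" shows "\<nu> (f + g) = \<nu> g"
proof -
  have "f + g = g + f" by (rule add.commute)
  then show ?thesis using nu_add_eq[OF assms] by (simp only:)
qed

lemma nu_sum_ge: "finite I \<Longrightarrow> (\<And>i. i \<in> I \<Longrightarrow> X \<le> \<nu> (F i)) \<Longrightarrow> X \<le> \<nu> (\<Sum>i\<in>I. F i)"
proof (induction I rule: finite_induct)
  case empty then show ?case by (simp add: nu0)
next
  case (insert x I)
  then have "X \<le> \<nu> (F x)" "X \<le> \<nu> (\<Sum>i\<in>I. F i)" by simp_all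
  then have "X \<le> min (\<nu> (F x)) (\<nu> (\<Sum>i\<in>I. F i))" by simp
  also have "\<dots> \<le> \<nu> (F x + (\<Sum>i\<in>I. F i))" by (rule nu_add)
  finally show ?case using insert by simp
qed

lemma nu_sum_gt: "finite I \<Longrightarrow> X \<noteq> Pinf \<Longrightarrow> (\<And>i. i \<in> I \<Longrightarrow> X < \<nu> (F i)) \<Longrightarrow> X < \<nu> (\<Sum>i\<in>I. F i)"
proof (induction I rule: finite_induct)
  case empty then show ?case by (cases X) (simp_all add: nu0)
next
  case (insert x I)
  then have "X < \<nu> (F x)" "X < \<nu> (\<Sum>i\<in>I. F i)" by simp_all
  then have "X < min (\<nu> (F x)) (\<nu> (\<Sum>i\<in>I. F i))" by simp
  also have "\<dots> \<le> \<nu> (F x + (\<Sum>i\<in>I. F i))" by (rule nu_add)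
  finally show ?case using insert by simp
qed

lemma nu_power: "\<nu> Q = Fin c \<Longrightarrow> \<nu> (Q ^ j) = Fin (nsm j c)"
  by (induction j) (simp_all add: nu1 nu_mult)

lemma nu_fin_mult: "\<nu> a = Fin x \<Longrightarrow> \<nu> b = Fin y \<Longrightarrow> \<nu> (a * b) = Fin (x + y)"
  by (simp add: nu_mult)

end
lemma ext_lt_add: "Fin c < x \<Longrightarrow> Fin d \<le> y \<Longrightarrow> Fin (c + d) < x + (y::'b::linordered_ab_group_add extended)"
  by (cases x; cases y) (simp_all add: add_less_le_mono)

lemma ext_lt_add2: "Fin c \<le> x \<Longrightarrow> Fin d < y \<Longrightarrow> Fin (c + d) < x + (y::'b::linordered_ab_group_add extended)"
  by (cases x; cases y) (simp_all add: add_le_less_mono)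

lemma degree_div_bound:
  fixes F Q :: "'a::field poly"
  assumes "Q \<noteq> 0" "F div Q \<noteq> 0"
  shows "degree (F div Q) + degree Q \<le> degree F"
proof -
  define q r where "q = F div Q" and "r = F mod Q"
  have F: "F = q * Q + r" unfolding q_def r_def by simp
  have dq: "degree (q * Q) = degree q + degree Q" using assms by (simp add: q_def degree_mult_eq)
  show ?thesis
  proof (cases "r = 0")
    case True then show ?thesis using F dq q_def by simp
  next
    case False
    then have "degree r < degree Q" unfolding r_def using assms(1) by (rule_tac degree_mod_less') simp_all
    then have "degree r < degree (q * Q)" using dq by simp
    then have "degree F = degree (q * Q)" using F by (simp add: degree_add_eq_left)
    then show ?thesis using dq q_def by simp
  qed
qed

locale kp = pval \<nu> for \<nu> :: "'a::field poly \<Rightarrow> 'b::linordered_ab_group_add extended" +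
  fixes Q :: "'a poly" and m :: nat and \<gamma> e :: 'b
  assumes degQ: "degree Q = m" and m_pos: "1 \<le> m" and nuQ: "\<nu> Q = Fin \<gamma>"
    and small: "\<And>g. g \<noteq> 0 \<Longrightarrow> degree g < m \<Longrightarrow>
        \<exists>a. \<nu> g = Fin a \<and> (\<forall>s\<ge>1. Fin (a - nsm s e) < \<nu> (hasse s g))"
    and Qle: "\<And>s. Fin (\<gamma> - nsm s e) \<le> \<nu> (hasse s Q)"
    and Qeq: "\<exists>b\<ge>1. \<nu> (hasse b Q) = Fin (\<gamma> - nsm b e)"
begin

definition sm :: "'a poly \<Rightarrow> 'b \<Rightarrow> bool" where
  "sm g a \<longleftrightarrow> \<nu> g = Fin a \<and> (\<forall>s\<ge>1. Fin (a - nsm s e) < \<nu> (hasse s g))"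

lemma small_sm: "g \<noteq> 0 \<Longrightarrow> degree g < m \<Longrightarrow> \<exists>a. sm g a"
  using small unfolding sm_def by blast

lemma Q_nz: "Q \<noteq> 0" using degQ m_pos by auto

lemma sm_mult: assumes g: "sm g a" and h: "sm h b" shows "sm (g * h) (a + b)"
  unfolding sm_def
proof (intro conjI allI impI)
  show "\<nu> (g * h) = Fin (a + b)" using g h by (simp add: sm_def nu_mult)
next
  fix s :: nat assume s: "1 \<le> s"
  have "Fin (a + b - nsm s e) < \<nu> (\<Sum>i\<le>s. hasse i g * hasse (s - i) h)"
  proof (rule nu_sum_gt)
    fix i assume i: "i \<in> {..s}"
    show "Fin (a + b - nsm s e) < \<nu> (hasse i g * hasse (s - i) h)"
    proof (cases "i = 0")
      case True
      have "Fin a \<le> \<nu> (hasse 0 g)" using g by (simp add: sm_def hasse_0)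
      moreover have "Fin (b - nsm s e) < \<nu> (hasse s h)" using h s by (simp add: sm_def)
      ultimately have "Fin (a + (b - nsm s e)) < \<nu> (hasse 0 g) + \<nu> (hasse s h)"
        by (rule ext_lt_add2)
      then show ?thesis using True by (simp add: nu_mult algebra_simps)
    next
      case False
      have gi: "Fin (a - nsm i e) < \<nu> (hasse i g)" using g False by (simp add: sm_def)
      show ?thesis
      proof (cases "i = s")
        case True
        have "Fin b \<le> \<nu> (hasse 0 h)" using h by (simp add: sm_def hasse_0)
        with gi have "Fin ((a - nsm i e) + b) < \<nu> (hasse i g) + \<nu> (hasse 0 h)"
          by (rule ext_lt_add)
        then show ?thesis using True by (simp add: nu_mult algebra_simps)
      next
        case False
        then have "1 \<le> s - i" using i by auto
        then have "Fin (b - nsm (s - i) e) < \<nu> (hasse (s - i) h)" using h by (simp add: sm_def)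
        then have "Fin ((a - nsm i e) + (b - nsm (s - i) e)) < \<nu> (hasse i g) + \<nu> (hasse (s - i) h)"
          using gi by (intro ext_lt_add) simp_all
        moreover have "nsm i e + nsm (s - i) e = nsm s e" using i by (simp add: nsm_add[symmetric])
        ultimately show ?thesis by (simp add: nu_mult algebra_simps)
      qed
    qed
  qed simp_all

  then show "Fin (a + b - nsm s e) < \<nu> (hasse s (g * h))" by (simp add: hasse_mult)
qed

end

context kp begin

lemma hasse_qQ:
  assumes q: "sm q \<alpha>" and b: "1 \<le> b" and hb: "\<nu> (hasse b Q) = Fin (\<gamma> - nsm b e)"
  shows "\<nu> (hasse b (q * Q)) = Fin (\<alpha> + \<gamma> - nsm b e)"
proof -
  obtain b' where b': "b = Suc b'" using b by (cases b) auto
  have split: "hasse b (q * Q) = hasse 0 q * hasse b Q + (\<Sum>i\<le>b'. hasse (Suc i) q * hasse (b - Suc i) Q)"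
    unfolding hasse_mult b' by (subst sum.atMost_Suc_shift) simp
  have first: "\<nu> (hasse 0 q * hasse b Q) = Fin (\<alpha> + \<gamma> - nsm b e)"
    using q hb by (simp add: hasse_0 sm_def nu_mult algebra_simps)
  have rest: "Fin (\<alpha> + \<gamma> - nsm b e) < \<nu> (\<Sum>i\<le>b'. hasse (Suc i) q * hasse (b - Suc i) Q)"
  proof (rule nu_sum_gt)
    fix i assume i: "i \<in> {..b'}"
    have "1 \<le> Suc i" by simp
    then have "Fin (\<alpha> - nsm (Suc i) e) < \<nu> (hasse (Suc i) q)" using q unfolding sm_def by blast
    moreover have "Fin (\<gamma> - nsm (b - Suc i) e) \<le> \<nu> (hasse (b - Suc i) Q)" by (rule Qle)
    ultimately have "Fin ((\<alpha> - nsm (Suc i) e) + (\<gamma> - nsm (b - Suc i) e)) < \<nu> (hasse (Suc i) q) + \<nu> (hasse (b - Suc i) Q)"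
      by (rule ext_lt_add)
    moreover have "nsm (Suc i) e + nsm (b - Suc i) e = nsm b e" using i b' by (simp add: nsm_add[symmetric])
    ultimately show "Fin (\<alpha> + \<gamma> - nsm b e) < \<nu> (hasse (Suc i) q * hasse (b - Suc i) Q)"
      by (simp add: nu_mult algebra_simps)
  qed simp_all
  show ?thesis unfolding split using nu_add_eq[of "hasse 0 q * hasse b Q"] first rest by simp
qed

lemma key:
  assumes g: "g \<noteq> 0" "degree g < m" and h: "h \<noteq> 0" "degree h < m"
  shows "\<nu> (g * h mod Q) = \<nu> (g * h) \<and> \<nu> (g * h) < \<nu> (g * h div Q * Q)"
proof -
  define F where "F = g * h"
  define q r where "q = F div Q" and "r = F mod Q"
  have F: "F = q * Q + r" unfolding q_def r_def by simp
  obtain a1 where a1: "sm g a1" using small_sm g by blast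
  obtain a2 where a2: "sm h a2" using small_sm h by blast
  have smF: "sm F (a1 + a2)" unfolding F_def by (rule sm_mult[OF a1 a2])
  have nuF: "\<nu> F = Fin (a1 + a2)" using smF by (simp add: sm_def)
  have "\<nu> (F mod Q) = \<nu> F \<and> \<nu> F < \<nu> (F div Q * Q)"
  proof (cases "q = 0")
    case True
    have "F mod Q = F" using F True r_def by simp
    moreover have "F div Q = 0" using True q_def by simp
    ultimately show ?thesis using nuF by (simp add: nu0)
  next
    case False
    have "degree F \<le> degree g + degree h" unfolding F_def by (rule degree_mult_le)
    moreover have "degree q + m \<le> degree F" using degree_div_bound[OF Q_nz, of F] False
      by (simp add: q_def degQ)
    ultimately have "degree q < m" using g h by linarith
    then obtain \<alpha> where q: "sm q \<alpha>" using small_sm False by blast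
    have nuqQ: "\<nu> (q * Q) = Fin (\<alpha> + \<gamma>)" using q nuQ by (simp add: sm_def nu_mult)
    obtain b where b: "1 \<le> b" and hb: "\<nu> (hasse b Q) = Fin (\<gamma> - nsm b e)" using Qeq by blast
    have hqQ: "\<nu> (hasse b (q * Q)) = Fin (\<alpha> + \<gamma> - nsm b e)" by (rule hasse_qQ[OF q b hb])
    have rlt: "\<nu> r < Fin (\<alpha> + \<gamma>)"
    proof (rule ccontr)
      assume "\<not> \<nu> r < Fin (\<alpha> + \<gamma>)"
      then have rge: "Fin (\<alpha> + \<gamma>) \<le> \<nu> r" by simp
      have hr: "Fin (\<alpha> + \<gamma> - nsm b e) < \<nu> (hasse b r)"
      proof (cases "r = 0")
        case True then show ?thesis by (simp add: nu0)
      next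
        case False
        have "degree r < m" using False degree_mod_less'[OF Q_nz, of F] by (simp add: r_def degQ)
        then obtain \<rho> where rho: "sm r \<rho>" using small_sm False by blast
        then have "\<alpha> + \<gamma> \<le> \<rho>" using rge by (simp add: sm_def)
        then have "Fin (\<alpha> + \<gamma> - nsm b e) \<le> Fin (\<rho> - nsm b e)" by simp
        also have "\<dots> < \<nu> (hasse b r)" using rho b by (simp add: sm_def)
        finally show ?thesis .
      qed
      have "\<nu> (hasse b F) = Fin (\<alpha> + \<gamma> - nsm b e)"
        using nu_add_eq[of "hasse b (q * Q)" "hasse b r"] hqQ hr F by (simp add: hasse_add)
      moreover have "Fin (a1 + a2 - nsm b e) < \<nu> (hasse b F)" using smF b by (simp add: sm_def)
      moreover have "Fin (\<alpha> + \<gamma>) \<le> \<nu> F"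
      proof -
        have "min (\<nu> (q * Q)) (\<nu> r) \<le> \<nu> F" using nu_add[of "q * Q" r] F by simp
        then show ?thesis using nuqQ rge by (simp add: min_def split: if_splits)
      qed
      ultimately show False using nuF by simp
    qed
    then have "\<nu> F = \<nu> r" using nu_add_eq'[of r "q * Q"] nuqQ F by simp
    then show ?thesis using rlt nuqQ by (simp add: q_def[symmetric] r_def[symmetric])
  qed
  then show ?thesis unfolding F_def .
qed

end

section \<open>Expansions\<close>

context fixes P :: "'a::field poly" begin

lemma qcoeff_0: "qcoeff P f 0 = f mod P"
  by (simp add: qcoeff_def)

lemma qcoeff_Suc: "qcoeff P f (Suc i) = qcoeff P (f div P) i"
  by (simp add: qcoeff_def poly_div_mult_right)

lemma qcoeff_degree: "degree P \<ge> 1 \<Longrightarrow> degree (qcoeff P f i) < degree P"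
proof -
  assume d: "degree P \<ge> 1"
  then have "P \<noteq> 0" by auto
  show ?thesis
  proof (cases "qcoeff P f i = 0")
    case True then show ?thesis using d by simp
  next
    case False then show ?thesis unfolding qcoeff_def using degree_mod_less'[OF \<open>P \<noteq> 0\<close>] by blast
  qed
qed

lemma qcoeff_add: "qcoeff P (f + g) i = qcoeff P f i + qcoeff P g i"
  by (simp add: qcoeff_def poly_div_add_left poly_mod_add_left)

lemma qcoeff_zero[simp]: "qcoeff P 0 i = 0"
  by (simp add: qcoeff_def)

lemma qcoeff_sum: "qcoeff P (\<Sum>t\<in>T. F t) i = (\<Sum>t\<in>T. qcoeff P (F t) i)"
proof (induction T rule: infinite_finite_induct)
  case (insert x F) then show ?case by (simp add: qcoeff_add)
qed simp_all

lemma degree_power_ge: "degree P \<ge> 1 \<Longrightarrow> i \<le> degree (P ^ i)"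
proof -
  assume d: "degree P \<ge> 1"
  then have "P \<noteq> 0" by auto
  then have "degree (P ^ i) = i * degree P" by (simp add: degree_power_eq)
  moreover have "i * 1 \<le> i * degree P" using d by (rule mult_le_mono2)
  ultimately show ?thesis by simp
qed

lemma qcoeff_beyond: "degree P \<ge> 1 \<Longrightarrow> degree f < i \<Longrightarrow> qcoeff P f i = 0"
proof -
  assume d: "degree P \<ge> 1" "degree f < i"
  then have "degree f < degree (P ^ i)" using degree_power_ge[of i] by simp
  then have "f div P ^ i = 0" by (rule div_poly_less)
  then show ?thesis by (simp add: qcoeff_def)
qed

lemma qexp_aux: "f = (\<Sum>i<N. qcoeff P f i * P ^ i) + P ^ N * (f div P ^ N)"
proof (induction N)
  case 0 then show ?case by simp
next
  case (Suc N)
  have "f div P ^ N = (f div P ^ N) mod P + P * ((f div P ^ N) div P)" by simp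
  moreover have "(f div P ^ N) div P = f div P ^ Suc N" by (simp only: poly_div_mult_right power_Suc2)
  ultimately have e: "f div P ^ N = qcoeff P f N + P * (f div P ^ Suc N)"
    by (simp add: qcoeff_def)
  have "P ^ N * (f div P ^ N) = qcoeff P f N * P ^ N + P ^ Suc N * (f div P ^ Suc N)"
    by (subst e) (simp only: distrib_left power_Suc2 mult_ac)
  then show ?case using Suc.IH by (simp add: add.assoc)
qed

lemma qexp: "degree P \<ge> 1 \<Longrightarrow> f = (\<Sum>i\<le>degree f. qcoeff P f i * P ^ i)"
proof -
  assume d: "degree P \<ge> 1"
  have "degree f < degree (P ^ Suc (degree f))" using degree_power_ge[OF d, of "Suc (degree f)"] by simp
  then have "f div P ^ Suc (degree f) = 0" by (rule div_poly_less)
  then show ?thesis using qexp_aux[where f=f and N="Suc (degree f)"] by (simp add: lessThan_Suc_atMost)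
qed

lemma qcoeff_unique:
  assumes d: "degree P \<ge> 1" and c: "\<And>k. degree (c k) < degree P"
  shows "qcoeff P (\<Sum>k\<le>N. c k * P ^ k) n = (if n \<le> N then c n else 0)"
  using c
proof (induction n arbitrary: c N)
  case 0
  show ?case
  proof (cases N)
    case 0 then show ?thesis using "0.prems" by (simp add: qcoeff_0 mod_poly_less)
  next
    case (Suc N')
    have "(\<Sum>k\<le>N. c k * P ^ k) = c 0 + P * (\<Sum>k\<le>N'. c (Suc k) * P ^ k)"
      unfolding Suc by (subst sum.atMost_Suc_shift) (simp add: sum_distrib_left mult_ac)
    then show ?thesis using "0.prems" by (simp add: qcoeff_0 mod_poly_less)
  qed
next
  case (Suc n)
  have P0: "P \<noteq> 0" using d by auto
  show ?case
  proof (cases N)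
    case 0
    have "c 0 div P = 0" using Suc.prems by (simp add: div_poly_less)
    then show ?thesis using 0 by (simp add: qcoeff_Suc)
  next
    case (Suc N')
    have "(\<Sum>k\<le>N. c k * P ^ k) = c 0 + P * (\<Sum>k\<le>N'. c (Suc k) * P ^ k)"
      unfolding Suc by (subst sum.atMost_Suc_shift) (simp add: sum_distrib_left mult_ac)
    moreover have "c 0 div P = 0" using Suc.prems by (simp add: div_poly_less)
    ultimately have "(\<Sum>k\<le>N. c k * P ^ k) div P = (\<Sum>k\<le>N'. c (Suc k) * P ^ k)"
      using P0 by (simp add: poly_div_add_left)
    then show ?thesis using Suc.IH[of "\<lambda>k. c (Suc k)" N'] Suc.prems Suc
      by (simp add: qcoeff_Suc)
  qed
qed

lemma qcoeff_small: "degree P \<ge> 1 \<Longrightarrow> degree a < degree P \<Longrightarrow> qcoeff P a n = (if n = 0 then a else 0)"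
  using qcoeff_unique[of "\<lambda>k. a" 0 n] by simp

lemma qcoeff_shift:
  assumes d: "degree P \<ge> 1"
  shows "qcoeff P (F * P ^ j) i = (if j \<le> i then qcoeff P F (i - j) else 0)"
proof -
  have P0: "P \<noteq> 0" using d by auto
  show ?thesis
  proof (cases "j \<le> i")
    case True
    have "F * P ^ j div P ^ i = (P ^ j * F) div (P ^ j * P ^ (i - j))"
      using True by (simp add: mult.commute power_add[symmetric])
    also have "\<dots> = F div P ^ (i - j)" using P0 by (rule_tac div_mult_mult1) simp
    finally show ?thesis using True by (simp add: qcoeff_def)
  next
    case False
    define k where "k = j - i - 1"
    have "j = i + k + 1" using False k_def by simp
    then have "P ^ j = P ^ i * P ^ k * P" by (simp only: power_add power_one_right)
    then have "F * P ^ j = F * (P ^ i * P ^ k * P)" by (simp only:)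
    also have "\<dots> = P ^ i * (F * P ^ (j - i - 1)) * P" unfolding k_def by (simp only: mult_ac)
    finally have "F * P ^ j = P ^ i * (F * P ^ (j - i - 1)) * P" .
    then have "F * P ^ j div P ^ i = P ^ i * (F * P ^ (j - i - 1) * P) div P ^ i"
      by (simp only: mult.assoc)
    also have "\<dots> = F * P ^ (j - i - 1) * P" using P0 by (rule_tac nonzero_mult_div_cancel_left) simp
    finally have "F * P ^ j div P ^ i = (F * P ^ (j - i - 1)) * P" .
    then show ?thesis using False by (simp add: qcoeff_def)
  qed
qed

end

lemma degree_div_lt:
  fixes x P :: "'a::field poly"
  assumes d: "degree P \<ge> 1" and x: "degree x \<le> 2 * degree P - 2"
  shows "degree (x div P) < degree P"
proof (cases "x div P = 0")
  case True then show ?thesis using d by simp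
next
  case False
  have "P \<noteq> 0" using d by auto
  from degree_div_bound[OF this False] x d show ?thesis by linarith
qed

lemma qcoeff_scal:
  fixes P f b :: "'a::field poly"
  assumes d: "degree P \<ge> 1" and b: "degree b < degree P"
  shows "qcoeff P (f * b) i = (qcoeff P f i * b) mod P + (if i = 0 then 0 else (qcoeff P f (i - 1) * b) div P)"
proof -
  define a where "a = qcoeff P f"
  define N where "N = degree f"
  define r where "r k = (a k * b) mod P" for k
  define q where "q k = (a k * b) div P" for k
  define c where "c k = r k + (if k = 0 then 0 else q (k - 1))" for k
  have P0: "P \<noteq> 0" using d by auto
  have dr: "degree (r k) \<le> degree P - 1" for k
  proof (cases "r k = 0")
    case False then show ?thesis using degree_mod_less'[OF P0, of "a k * b"] r_def by simp
  qed simp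
  have dq: "degree (q k) \<le> degree P - 1" for k
  proof -
    have "degree (a k) < degree P" unfolding a_def by (rule qcoeff_degree[OF d])
    then have "degree (a k * b) \<le> 2 * degree P - 2" using b degree_mult_le[of "a k" b] by linarith
    then show ?thesis using degree_div_lt[OF d] q_def by force
  qed
  have dc: "degree (c k) < degree P" for k
  proof -
    have "degree (c k) \<le> degree P - 1" unfolding c_def
      by (rule degree_add_le) (use dr dq in auto)
    then show ?thesis using d by linarith
  qed
  have aN: "a (Suc N) = 0" unfolding a_def N_def by (rule qcoeff_beyond[OF d]) simp
  have "(\<Sum>k\<le>Suc N. c k * P ^ k) = (\<Sum>k\<le>Suc N. r k * P ^ k) + (\<Sum>k\<le>Suc N. (if k = 0 then 0 else q (k - 1)) * P ^ k)"
    unfolding c_def by (simp add: distrib_right sum.distrib)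
  also have "(\<Sum>k\<le>Suc N. r k * P ^ k) = (\<Sum>k\<le>N. r k * P ^ k)"
    using aN by (simp add: r_def)
  also have "(\<Sum>k\<le>Suc N. (if k = 0 then 0 else q (k - 1)) * P ^ k) = (\<Sum>k\<le>N. q k * P ^ Suc k)"
    by (subst sum.atMost_Suc_shift) simp
  also have "(\<Sum>k\<le>N. r k * P ^ k) + (\<Sum>k\<le>N. q k * P ^ Suc k) = (\<Sum>k\<le>N. (r k + q k * P) * P ^ k)"
    unfolding sum.distrib[symmetric] by (rule sum.cong) (simp_all add: algebra_simps)
  also have "\<dots> = (\<Sum>k\<le>N. a k * P ^ k) * b"
    unfolding sum_distrib_right by (rule sum.cong) (simp_all add: r_def q_def mult_ac)
  also have "(\<Sum>k\<le>N. a k * P ^ k) = f" unfolding a_def N_def by (rule qexp[OF d, symmetric])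
  finally have fb: "f * b = (\<Sum>k\<le>Suc N. c k * P ^ k)" by simp
  have "qcoeff P (f * b) i = (if i \<le> Suc N then c i else 0)"
    unfolding fb by (rule qcoeff_unique[OF d dc])
  also have "\<dots> = c i"
  proof (cases "i \<le> Suc N")
    case False
    then have "a i = 0" "a (i - 1) = 0" unfolding a_def N_def by (simp_all add: qcoeff_beyond[OF d])
    then show ?thesis using False by (simp add: c_def r_def q_def)
  qed simp
  finally show ?thesis by (simp add: c_def r_def q_def a_def)
qed

lemma ext_le_addF: "Fin c \<le> x \<Longrightarrow> Fin (c + d) \<le> x + Fin (d::'b::linordered_ab_group_add)"
  by (cases x) simp_all

lemma ext_lt_addF: "Fin c < x \<Longrightarrow> Fin (c + d) < x + Fin (d::'b::linordered_ab_group_add)"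
  by (cases x) simp_all

context kp begin

lemma dQ1: "1 \<le> degree Q" using degQ m_pos by simp

lemma nuQpow: "\<nu> (Q ^ j) = Fin (nsm j \<gamma>)"
  by (rule nu_power[OF nuQ])

definition vQ :: "'a poly \<Rightarrow> nat \<Rightarrow> 'b extended" where
  "vQ f i = \<nu> (qcoeff Q f i * Q ^ i)"

definition bnd :: "'a poly \<Rightarrow> 'b \<Rightarrow> nat \<Rightarrow> bool" where
  "bnd f M J \<longleftrightarrow> (\<forall>i. Fin M \<le> vQ f i \<and> (J < i \<longrightarrow> Fin M < vQ f i))"

definition lead :: "'a poly \<Rightarrow> 'b \<Rightarrow> nat \<Rightarrow> bool" where
  "lead f M J \<longleftrightarrow> bnd f M J \<and> vQ f J = Fin M"

lemma vQ_zero[simp]: "vQ 0 i = Pinf"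
  by (simp add: vQ_def nu0)

lemma vQ_eq: "vQ f i = \<nu> (qcoeff Q f i) + Fin (nsm i \<gamma>)"
  by (simp add: vQ_def nu_mult nuQpow)

lemma bnd_zero: "bnd 0 M J"
  by (simp add: bnd_def)

lemma bnd_ge: "bnd f M J \<Longrightarrow> Fin M \<le> vQ f i"
  unfolding bnd_def by (erule allE[of _ i]) (erule conjunct1)

lemma bnd_gt: "bnd f M J \<Longrightarrow> J < i \<Longrightarrow> Fin M < vQ f i"
  unfolding bnd_def by (erule allE[of _ i]) (erule conjE, erule mp)

lemma bndI: "(\<And>i. Fin M \<le> vQ f i) \<Longrightarrow> (\<And>i. J < i \<Longrightarrow> Fin M < vQ f i) \<Longrightarrow> bnd f M J"
  unfolding bnd_def by blast

lemma bnd_mono: "bnd f M J \<Longrightarrow> M' \<le> M \<Longrightarrow> J \<le> J' \<Longrightarrow> bnd f M' J'"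
proof (rule bndI)
  fix i assume b: "bnd f M J" and M: "M' \<le> M" and J: "J \<le> J'"
  have "Fin M' \<le> Fin M" using M by simp
  also have "Fin M \<le> vQ f i" using b by (rule bnd_ge)
  finally show "Fin M' \<le> vQ f i" .
next
  fix i assume b: "bnd f M J" and M: "M' \<le> M" and J: "J \<le> J'" and i: "J' < i"
  then have "J < i" by simp
  have "Fin M' \<le> Fin M" using M by simp
  also have "Fin M < vQ f i" using b \<open>J < i\<close> by (rule bnd_gt)
  finally show "Fin M' < vQ f i" .
qed

lemma bnd_lt: "bnd f M J \<Longrightarrow> M' < M \<Longrightarrow> Fin M' < vQ f i"
proof -
  assume b: "bnd f M J" and M: "M' < M"
  have "Fin M' < Fin M" using M by simp
  also have "Fin M \<le> vQ f i" using b by (rule bnd_ge)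
  finally show ?thesis .
qed

lemma bnd_lt_bnd: "bnd f M J \<Longrightarrow> M' < M \<Longrightarrow> bnd f M' J'"
proof (rule bndI)
  fix i assume "bnd f M J" "M' < M"
  then have "Fin M' < vQ f i" by (rule bnd_lt)
  then show "Fin M' \<le> vQ f i" by (rule less_imp_le)
next
  fix i assume "bnd f M J" "M' < M"
  then show "Fin M' < vQ f i" by (rule bnd_lt)
qed

lemma vQ_shift: "vQ (F * Q ^ j) i = (if j \<le> i then vQ F (i - j) + Fin (nsm j \<gamma>) else Pinf)"
proof (cases "j \<le> i")
  case True
  have "nsm i \<gamma> = nsm (i - j) \<gamma> + nsm j \<gamma>" using True by (simp add: nsm_add[symmetric])
  then show ?thesis using True
    by (simp add: vQ_eq qcoeff_shift[OF dQ1] add.assoc)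
next
  case False then show ?thesis by (simp add: vQ_def qcoeff_shift[OF dQ1] nu0)
qed

lemma bnd_shift: "bnd F M J \<Longrightarrow> bnd (F * Q ^ j) (M + nsm j \<gamma>) (J + j)"
proof (rule bndI)
  fix i assume b: "bnd F M J"
  show "Fin (M + nsm j \<gamma>) \<le> vQ (F * Q ^ j) i"
  proof (cases "j \<le> i")
    case True
    have "Fin (M + nsm j \<gamma>) \<le> vQ F (i - j) + Fin (nsm j \<gamma>)"
      by (rule ext_le_addF) (rule bnd_ge[OF b])
    then show ?thesis using True by (simp add: vQ_shift)
  qed (simp add: vQ_shift)
next
  fix i assume b: "bnd F M J" and i: "J + j < i"
  then have "J < i - j" "j \<le> i" by auto
  have "Fin (M + nsm j \<gamma>) < vQ F (i - j) + Fin (nsm j \<gamma>)"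
    by (rule ext_lt_addF) (rule bnd_gt[OF b \<open>J < i - j\<close>])
  then show "Fin (M + nsm j \<gamma>) < vQ (F * Q ^ j) i" using \<open>j \<le> i\<close> by (simp add: vQ_shift)
qed

lemma lead_shift: "lead F M J \<Longrightarrow> lead (F * Q ^ j) (M + nsm j \<gamma>) (J + j)"
  unfolding lead_def using bnd_shift by (simp add: vQ_shift)

lemma qcoeff_shift_top: "qcoeff Q (F * Q ^ j) (J + j) = qcoeff Q F J"
  by (simp add: qcoeff_shift[OF dQ1])

end

context kp begin

lemma scal_r:
  assumes b: "b \<noteq> 0" "degree b < m" and nb: "\<nu> b = Fin \<beta>"
  shows "\<nu> ((qcoeff Q f i * b) mod Q * Q ^ i) = vQ f i + Fin \<beta>"
proof (cases "qcoeff Q f i = 0")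
  case True then show ?thesis by (simp add: vQ_def nu0)
next
  case False
  have "degree (qcoeff Q f i) < m" using qcoeff_degree[OF dQ1] degQ by simp
  then have "\<nu> ((qcoeff Q f i * b) mod Q) = \<nu> (qcoeff Q f i) + \<nu> b"
    using key[OF False _ b] by (simp add: nu_mult)
  then show ?thesis by (simp add: vQ_def nu_mult nb ac_simps)
qed

lemma scal_q:
  assumes b: "b \<noteq> 0" "degree b < m" and nb: "\<nu> b = Fin \<beta>" and c: "Fin c \<le> vQ f k"
  shows "Fin (c + \<beta>) < \<nu> ((qcoeff Q f k * b) div Q * Q ^ Suc k)"
proof (cases "qcoeff Q f k = 0")
  case True then show ?thesis by (simp add: nu0)
next
  case False
  have "degree (qcoeff Q f k) < m" using qcoeff_degree[OF dQ1] degQ by simp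
  then obtain \<alpha> where a: "\<nu> (qcoeff Q f k) = Fin \<alpha>" using small False by blast
  have k1: "\<nu> (qcoeff Q f k * b) < \<nu> ((qcoeff Q f k * b) div Q * Q)"
    using key[OF False _ b] \<open>degree (qcoeff Q f k) < m\<close> by simp
  then have k2: "Fin (\<alpha> + \<beta>) < \<nu> ((qcoeff Q f k * b) div Q * Q)" using a nb by (simp add: nu_mult)
  have c2: "c \<le> \<alpha> + nsm k \<gamma>" using c a by (simp add: vQ_eq)
  have "(qcoeff Q f k * b) div Q * Q ^ Suc k = ((qcoeff Q f k * b) div Q * Q) * Q ^ k"
    by (simp add: mult_ac)
  then have e: "\<nu> ((qcoeff Q f k * b) div Q * Q ^ Suc k) = \<nu> ((qcoeff Q f k * b) div Q * Q) + Fin (nsm k \<gamma>)"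
    by (simp add: nu_mult nuQpow add.assoc)
  have lt: "Fin ((\<alpha> + \<beta>) + nsm k \<gamma>) < \<nu> ((qcoeff Q f k * b) div Q * Q) + Fin (nsm k \<gamma>)"
    using k2 by (rule ext_lt_addF)
  have le: "Fin (c + \<beta>) \<le> Fin ((\<alpha> + \<beta>) + nsm k \<gamma>)" using c2 by (simp add: algebra_simps)
  show ?thesis unfolding e using le lt by (rule order.strict_trans1)
qed

lemma scal_d:
  assumes b: "b \<noteq> 0" "degree b < m" and nb: "\<nu> b = Fin \<beta>" and bd: "bnd f M J"
  shows "Fin (M + \<beta>) < \<nu> ((if i = 0 then 0 else (qcoeff Q f (i - 1) * b) div Q) * Q ^ i)"
proof (cases i)
  case 0 then show ?thesis by (simp add: nu0)
next
  case (Suc k)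
  have "Fin M \<le> vQ f k" by (rule bnd_ge[OF bd])
  from scal_q[OF b nb this] show ?thesis using Suc by simp
qed

lemma scal_bnd:
  assumes b: "b \<noteq> 0" "degree b < m" and nb: "\<nu> b = Fin \<beta>" and bd: "bnd f M J"
  shows "bnd (f * b) (M + \<beta>) J"
proof (rule bndI)
  fix i
  define R D where "R = (qcoeff Q f i * b) mod Q * Q ^ i"
    and "D = (if i = 0 then 0 else (qcoeff Q f (i - 1) * b) div Q) * Q ^ i"
  have v: "vQ (f * b) i = \<nu> (R + D)"
    unfolding vQ_def R_def D_def qcoeff_scal[OF dQ1 b(2)[folded degQ]] by (simp add: distrib_right)
  have D: "Fin (M + \<beta>) < \<nu> D" unfolding D_def by (rule scal_d[OF b nb bd])
  have R: "\<nu> R = vQ f i + Fin \<beta>" unfolding R_def by (rule scal_r[OF b nb])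
  have R1: "Fin (M + \<beta>) \<le> \<nu> R" unfolding R by (rule ext_le_addF) (rule bnd_ge[OF bd])
  have "Fin (M + \<beta>) \<le> min (\<nu> R) (\<nu> D)" using R1 D by simp
  also have "\<dots> \<le> \<nu> (R + D)" by (rule nu_add)
  finally show "Fin (M + \<beta>) \<le> vQ (f * b) i" using v by simp
  assume i: "J < i"
  have R2: "Fin (M + \<beta>) < \<nu> R" unfolding R by (rule ext_lt_addF) (rule bnd_gt[OF bd i])
  have "Fin (M + \<beta>) < min (\<nu> R) (\<nu> D)" using R2 D by simp
  also have "\<dots> \<le> \<nu> (R + D)" by (rule nu_add)
  finally show "Fin (M + \<beta>) < vQ (f * b) i" using v by simp
qed

lemma scal_lead:
  assumes b: "b \<noteq> 0" "degree b < m" and nb: "\<nu> b = Fin \<beta>" and ld: "lead f M J"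
  shows "lead (f * b) (M + \<beta>) J \<and>
    Fin (M + \<beta>) < \<nu> ((qcoeff Q (f * b) J - (qcoeff Q f J * b) mod Q) * Q ^ J)"
proof -
  have bd: "bnd f M J" using ld by (simp add: lead_def)
  define R D where "R = (qcoeff Q f J * b) mod Q * Q ^ J"
    and "D = (if J = 0 then 0 else (qcoeff Q f (J - 1) * b) div Q) * Q ^ J"
  have qc: "qcoeff Q (f * b) J - (qcoeff Q f J * b) mod Q = (if J = 0 then 0 else (qcoeff Q f (J - 1) * b) div Q)"
    unfolding qcoeff_scal[OF dQ1 b(2)[folded degQ]] by simp
  have v: "vQ (f * b) J = \<nu> (R + D)"
    unfolding vQ_def R_def D_def qcoeff_scal[OF dQ1 b(2)[folded degQ]] by (simp add: distrib_right)
  have D: "Fin (M + \<beta>) < \<nu> D" unfolding D_def by (rule scal_d[OF b nb bd])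
  have R: "\<nu> R = Fin (M + \<beta>)" unfolding R_def scal_r[OF b nb] using ld by (simp add: lead_def)
  have "vQ (f * b) J = Fin (M + \<beta>)" using v nu_add_eq[of R D] R D by simp
  then show ?thesis using scal_bnd[OF b nb bd] D qc unfolding lead_def D_def by simp
qed

end

context kp begin

lemma vQ_sum: "vQ (\<Sum>t\<in>T. F t) i = \<nu> (\<Sum>t\<in>T. qcoeff Q (F t) i * Q ^ i)"
  by (simp add: vQ_def qcoeff_sum sum_distrib_right)

lemma sum_lead:
  assumes T: "finite T" "t0 \<in> T" and ld: "lead (F t0) M J" and bd: "\<And>t. t \<in> T \<Longrightarrow> bnd (F t) M J"
    and st: "\<And>t. t \<in> T \<Longrightarrow> t \<noteq> t0 \<Longrightarrow> Fin M < vQ (F t) J"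
  shows "lead (\<Sum>t\<in>T. F t) M J \<and> Fin M < \<nu> ((qcoeff Q (\<Sum>t\<in>T. F t) J - qcoeff Q (F t0) J) * Q ^ J)"
proof -
  have b: "bnd (\<Sum>t\<in>T. F t) M J"
  proof (rule bndI)
    fix i
    have "Fin M \<le> \<nu> (qcoeff Q (F t) i * Q ^ i)" if "t \<in> T" for t
      using bnd_ge[OF bd[OF that], of i] by (simp add: vQ_def)
    then show "Fin M \<le> vQ (\<Sum>t\<in>T. F t) i" unfolding vQ_sum
      by (rule nu_sum_ge[OF T(1)])
  next
    fix i assume i: "J < i"
    have "Fin M < \<nu> (qcoeff Q (F t) i * Q ^ i)" if "t \<in> T" for t
      using bnd_gt[OF bd[OF that] i] by (simp add: vQ_def)
    then show "Fin M < vQ (\<Sum>t\<in>T. F t) i" unfolding vQ_sum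
      by (rule nu_sum_gt[OF T(1), rotated]) simp_all
  qed
  define X where "X t = qcoeff Q (F t) J * Q ^ J" for t
  have split: "(\<Sum>t\<in>T. X t) = X t0 + (\<Sum>t\<in>T - {t0}. X t)"
    using T by (rule sum.remove)
  have rest: "Fin M < \<nu> (\<Sum>t\<in>T - {t0}. X t)"
    by (rule nu_sum_gt) (use T st in \<open>simp_all add: X_def vQ_def\<close>)
  have x0: "\<nu> (X t0) = Fin M" using ld by (simp add: lead_def vQ_def X_def)
  have "vQ (\<Sum>t\<in>T. F t) J = Fin M"
    unfolding vQ_sum X_def[symmetric] split using nu_add_eq[of "X t0"] rest x0 by simp
  moreover have "(qcoeff Q (\<Sum>t\<in>T. F t) J - qcoeff Q (F t0) J) * Q ^ J = (\<Sum>t\<in>T - {t0}. X t)"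
    unfolding qcoeff_sum X_def sum_distrib_right[symmetric] using sum.remove[OF T, of "\<lambda>t. qcoeff Q (F t) J"]
    by simp
  ultimately show ?thesis using b rest by (simp add: lead_def)
qed

lemma lead_nz: "lead f M J \<Longrightarrow> qcoeff Q f J \<noteq> 0"
  by (auto simp: lead_def vQ_def nu0)

lemma lead_le_degree: "lead f M J \<Longrightarrow> J \<le> degree f"
  using lead_nz qcoeff_beyond[OF dQ1] by (meson not_le)

lemma lead_nuQ: assumes ld: "lead f M J" shows "nuQ \<nu> Q f = Fin M \<and> degQ \<nu> Q f = J"
proof -
  have J: "J \<le> degree f" by (rule lead_le_degree[OF ld])
  have n: "nuQ \<nu> Q f = Fin M" unfolding nuQ_def vQ_def[symmetric]
  proof (rule Min_eqI)
    fix y assume "y \<in> (\<lambda>i. vQ f i) ` {..degree f}"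
    then show "Fin M \<le> y" using bnd_ge ld by (auto simp: lead_def)
  next
    show "Fin M \<in> (\<lambda>i. vQ f i) ` {..degree f}"
      by (rule rev_image_eqI[of J]) (use ld J in \<open>simp_all add: lead_def\<close>)
  qed simp
  have "SQ \<nu> Q f = {i. vQ f i = Fin M}" unfolding SQ_def n vQ_def ..
  moreover have "Max {i. vQ f i = Fin M} = J"
  proof (rule Max_eqI)
    have "{i. vQ f i = Fin M} \<subseteq> {..J}"
    proof
      fix i assume "i \<in> {i. vQ f i = Fin M}"
      then have "\<not> J < i" using bnd_gt[of f M J i] ld by (auto simp: lead_def)
      then show "i \<in> {..J}" by simp
    qed
    then show "finite {i. vQ f i = Fin M}" by (rule finite_subset) simp
  next
    fix y assume "y \<in> {i. vQ f i = Fin M}"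
    then show "y \<le> J" using bnd_gt[of f M J y] ld by (auto simp: lead_def not_le[symmetric])
  next
    show "J \<in> {i. vQ f i = Fin M}" using ld by (simp add: lead_def)
  qed
  ultimately show ?thesis using n by (simp add: degQ_def)
qed

end

context kp begin

lemma mult_lead:
  assumes lf: "lead f M1 J1" and lg: "lead g M2 J2"
  shows "lead (f * g) (M1 + M2) (J1 + J2) \<and>
    Fin (M1 + M2) < \<nu> ((qcoeff Q (f * g) (J1 + J2) - (qcoeff Q f J1 * qcoeff Q g J2) mod Q) * Q ^ (J1 + J2))"
proof -
  define N where "N = degree g"
  define b where "b j = qcoeff Q g j" for j
  define F where "F j = (f * b j) * Q ^ j" for j
  have bf: "bnd f M1 J1" using lf by (simp add: lead_def)
  have bg: "bnd g M2 J2" using lg by (simp add: lead_def)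
  have db: "degree (b j) < m" for j using qcoeff_degree[OF dQ1] degQ b_def by simp
  have fg: "f * g = (\<Sum>j\<le>N. F j)"
  proof -
    have "g = (\<Sum>j\<le>N. b j * Q ^ j)" unfolding N_def b_def by (rule qexp[OF dQ1])
    then have "f * g = f * (\<Sum>j\<le>N. b j * Q ^ j)" by simp
    also have "\<dots> = (\<Sum>j\<le>N. F j)" unfolding sum_distrib_left F_def by (simp add: mult.assoc)
    finally show ?thesis .
  qed
  have J2N: "J2 \<le> N" unfolding N_def by (rule lead_le_degree[OF lg])
  have bJ2: "b J2 \<noteq> 0" unfolding b_def by (rule lead_nz[OF lg])
  obtain \<beta> where nbJ: "\<nu> (b J2) = Fin \<beta>" using small bJ2 db by blast
  have M2: "M2 = \<beta> + nsm J2 \<gamma>" using lg nbJ by (simp add: lead_def vQ_eq b_def)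
  have sl: "lead (f * b J2) (M1 + \<beta>) J1 \<and>
    Fin (M1 + \<beta>) < \<nu> ((qcoeff Q (f * b J2) J1 - (qcoeff Q f J1 * b J2) mod Q) * Q ^ J1)"
    by (rule scal_lead[OF bJ2 db nbJ lf])
  have l0: "lead (F J2) (M1 + M2) (J1 + J2)"
    using lead_shift[of "f * b J2" "M1 + \<beta>" J1 J2] sl M2 by (simp add: F_def add.assoc)
  have bnds: "bnd (F j) (M1 + M2) (J1 + J2) \<and> (j \<noteq> J2 \<longrightarrow> Fin (M1 + M2) < vQ (F j) (J1 + J2))" for j
  proof (cases "b j = 0")
    case True then show ?thesis by (simp add: F_def bnd_zero)
  next
    case False
    obtain \<beta>j where nb: "\<nu> (b j) = Fin \<beta>j" using small False db by blast
    have vg: "vQ g j = Fin (\<beta>j + nsm j \<gamma>)" using nb by (simp add: vQ_eq b_def)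
    have bj: "bnd (F j) (M1 + \<beta>j + nsm j \<gamma>) (J1 + j)"
      unfolding F_def by (rule bnd_shift[OF scal_bnd[OF False db nb bf]])
    have ge: "M2 \<le> \<beta>j + nsm j \<gamma>" using bnd_ge[OF bg, of j] vg by simp
    show ?thesis
    proof (cases "M2 < \<beta>j + nsm j \<gamma>")
      case True
      then have lt: "M1 + M2 < M1 + \<beta>j + nsm j \<gamma>" by (simp add: add.assoc)
      show ?thesis using bnd_lt_bnd[OF bj lt] bnd_lt[OF bj lt] by simp
    next
      case False
      then have eq: "M1 + \<beta>j + nsm j \<gamma> = M1 + M2" using ge by (simp add: add.assoc)
      have "j \<le> J2"
      proof (rule ccontr)
        assume "\<not> j \<le> J2"
        then have "Fin M2 < vQ g j" using bnd_gt[OF bg] by simp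
        then show False using vg False by simp
      qed
      then have b2: "bnd (F j) (M1 + M2) (J1 + J2)" using bnd_mono[OF bj] eq by simp
      have "j \<noteq> J2 \<longrightarrow> Fin (M1 + M2) < vQ (F j) (J1 + J2)"
      proof
        assume "j \<noteq> J2"
        then have "J1 + j < J1 + J2" using \<open>j \<le> J2\<close> by simp
        then show "Fin (M1 + M2) < vQ (F j) (J1 + J2)" using bnd_gt[OF bj] eq by simp
      qed
      then show ?thesis using b2 by simp
    qed
  qed
  have S: "lead (\<Sum>j\<le>N. F j) (M1 + M2) (J1 + J2) \<and>
      Fin (M1 + M2) < \<nu> ((qcoeff Q (\<Sum>j\<le>N. F j) (J1 + J2) - qcoeff Q (F J2) (J1 + J2)) * Q ^ (J1 + J2))"
    by (rule sum_lead) (use J2N l0 bnds in auto)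
  have top: "qcoeff Q (F J2) (J1 + J2) = qcoeff Q (f * b J2) J1"
    unfolding F_def by (rule qcoeff_shift_top)
  define A where "A = (qcoeff Q (f * g) (J1 + J2) - qcoeff Q (F J2) (J1 + J2)) * Q ^ (J1 + J2)"
  define B where "B = (qcoeff Q (f * b J2) J1 - (qcoeff Q f J1 * b J2) mod Q) * Q ^ J1 * Q ^ J2"
  have A: "Fin (M1 + M2) < \<nu> A" using S fg by (simp add: A_def)
  have "Fin (M1 + \<beta> + nsm J2 \<gamma>) < \<nu> ((qcoeff Q (f * b J2) J1 - (qcoeff Q f J1 * b J2) mod Q) * Q ^ J1) + Fin (nsm J2 \<gamma>)"
    using sl by (intro ext_lt_addF) simp
  then have B: "Fin (M1 + M2) < \<nu> B" using M2 by (simp add: B_def nu_mult nuQpow add.assoc)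
  have "(qcoeff Q (f * g) (J1 + J2) - (qcoeff Q f J1 * qcoeff Q g J2) mod Q) * Q ^ (J1 + J2) = A + B"
    unfolding A_def B_def top b_def by (simp add: algebra_simps power_add)
  moreover have "Fin (M1 + M2) < \<nu> (A + B)"
  proof -
    have "Fin (M1 + M2) < min (\<nu> A) (\<nu> B)" using A B by simp
    also have "\<dots> \<le> \<nu> (A + B)" by (rule nu_add)
    finally show ?thesis .
  qed
  ultimately show ?thesis using S fg by simp
qed

end

context kp begin

lemma lead_small:
  assumes c: "c \<noteq> 0" "degree c < m" and nc: "\<nu> c = Fin \<kappa>"
  shows "lead c \<kappa> 0"
proof -
  have q: "qcoeff Q c i = (if i = 0 then c else 0)" for i
    using qcoeff_small[OF dQ1] c degQ by simp
  show ?thesis unfolding lead_def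
    by (intro conjI bndI) (simp_all add: vQ_def q nc nu0)
qed

lemma lead_one: "lead 1 0 0"
  using lead_small[of 1 0] m_pos nu1 by simp

lemma qcoeff_one: "qcoeff Q 1 i = (if i = 0 then 1 else 0)"
  using qcoeff_small[OF dQ1, of 1] m_pos degQ by simp

lemma coeff_approx_mult:
  assumes c: "c \<noteq> 0" "degree c < m" and nc: "\<nu> c = Fin \<kappa>"
    and u: "degree u < m" and uv: "Fin 0 < \<nu> (u - 1)"
  shows "Fin \<kappa> < \<nu> ((c * u) mod Q - c)"
proof (cases "u - 1 = 0")
  case True then show ?thesis using c by (simp add: mod_poly_less degQ nu0)
next
  case False
  have "degree (u - 1) \<le> max (degree u) (degree (1::'a poly))" by (rule degree_diff_le_max)
  then have du: "degree (u - 1) < m" using u m_pos by simp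
  have "c * u = c * (u - 1) + c" by (simp add: algebra_simps)
  then have "(c * u) mod Q = (c * (u - 1)) mod Q + c" using c degQ by (simp add: poly_mod_add_left mod_poly_less)
  then have e: "(c * u) mod Q - c = (c * (u - 1)) mod Q" by simp
  have "\<nu> ((c * (u - 1)) mod Q) = \<nu> c + \<nu> (u - 1)" using key[OF c False du] by (simp add: nu_mult)
  then show ?thesis unfolding e using nc uv by (cases "\<nu> (u - 1)") simp_all
qed

end

context kp begin

lemma nu_times_Qpow: "\<nu> (x * Q ^ j) = \<nu> x + Fin (nsm j \<gamma>)"
  by (simp add: nu_mult nuQpow)

lemma lt_add_min: "Fin M < \<nu> A \<Longrightarrow> Fin M < \<nu> B \<Longrightarrow> Fin M < \<nu> (A + B)"
proof -
  assume "Fin M < \<nu> A" "Fin M < \<nu> B"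
  then have "Fin M < min (\<nu> A) (\<nu> B)" by simp
  also have "\<dots> \<le> \<nu> (A + B)" by (rule nu_add)
  finally show ?thesis .
qed

lemma R_lead:
  assumes dR: "degree (Q - R) < m" and nR: "Fin \<gamma> < \<nu> R"
  shows "lead R \<gamma> 1 \<and> qcoeff Q R 1 = 1"
proof -
  define h where "h = Q - R"
  define c where "c (k::nat) = (if k = 0 then - h else if k = 1 then 1 else 0)" for k
  have dc: "degree (c k) < degree Q" for k
    using dR m_pos degQ degree_minus[of "Q - R"] by (simp add: c_def h_def)
  have sR: "(\<Sum>k\<le>1. c k * Q ^ k) = R" by (simp add: c_def h_def)
  have q: "qcoeff Q R i = (if i \<le> 1 then c i else 0)" for i
  proof -
    have "qcoeff Q (\<Sum>k\<le>1. c k * Q ^ k) i = (if i \<le> 1 then c i else 0)"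
      by (rule qcoeff_unique[OF dQ1]) (rule dc)
    then show ?thesis unfolding sR .
  qed
  have "\<nu> (Q + - R) = \<nu> Q" using nu_add_eq[of Q "- R"] nR nuQ by simp
  then have nh: "\<nu> h = Fin \<gamma>" using nuQ by (simp add: h_def)
  have v0: "vQ R 0 = Fin \<gamma>" using nh by (simp add: vQ_def q c_def)
  have v1: "vQ R 1 = Fin \<gamma>" using nuQ by (simp add: vQ_def q c_def)
  have v2: "1 < i \<Longrightarrow> vQ R i = Pinf" for i by (simp add: vQ_def q c_def nu0)
  have "bnd R \<gamma> 1"
  proof (rule bndI)
    fix i :: nat show "Fin \<gamma> \<le> vQ R i"
      using v0 v1 v2[of i] by (cases "i = 0"; cases "i = 1") simp_all
  next
    fix i :: nat assume "1 < i" then show "Fin \<gamma> < vQ R i" using v2 by simp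
  qed
  then show ?thesis using v1 by (simp add: lead_def q c_def)
qed

lemma Rpow_lead:
  assumes dR: "degree (Q - R) < m" and nR: "Fin \<gamma> < \<nu> R"
  shows "lead (R ^ j) (nsm j \<gamma>) j \<and> Fin (nsm j \<gamma>) < \<nu> ((qcoeff Q (R ^ j) j - 1) * Q ^ j)"
proof (induction j)
  case 0 then show ?case using lead_one by (simp add: qcoeff_one nu0)
next
  case (Suc j)
  have lR: "lead R \<gamma> 1" and qR: "qcoeff Q R 1 = 1" using R_lead[OF dR nR] by simp_all
  have ml: "lead (R ^ j * R) (nsm j \<gamma> + \<gamma>) (j + 1) \<and>
    Fin (nsm j \<gamma> + \<gamma>) < \<nu> ((qcoeff Q (R ^ j * R) (j + 1) - (qcoeff Q (R ^ j) j * qcoeff Q R 1) mod Q) * Q ^ (j + 1))"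
    using mult_lead[OF conjunct1[OF Suc.IH] lR] .
  have du: "degree (qcoeff Q (R ^ j) j) < degree Q" by (rule qcoeff_degree[OF dQ1])
  have e1: "(qcoeff Q (R ^ j) j * qcoeff Q R 1) mod Q = qcoeff Q (R ^ j) j"
    using du qR by (simp add: mod_poly_less)
  have ns: "nsm (Suc j) \<gamma> = nsm j \<gamma> + \<gamma>" by (simp add: add.commute)
  have pw: "R ^ Suc j = R ^ j * R" by (rule power_Suc2)
  define A where "A = (qcoeff Q (R ^ Suc j) (Suc j) - qcoeff Q (R ^ j) j) * Q ^ Suc j"
  define B where "B = ((qcoeff Q (R ^ j) j - 1) * Q ^ j) * Q"
  have A: "Fin (nsm (Suc j) \<gamma>) < \<nu> A" using ml e1 unfolding A_def ns pw by simp
  have "Fin (nsm j \<gamma> + \<gamma>) < \<nu> ((qcoeff Q (R ^ j) j - 1) * Q ^ j) + Fin \<gamma>"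
    using Suc.IH by (intro ext_lt_addF) simp
  then have B: "Fin (nsm (Suc j) \<gamma>) < \<nu> B" unfolding B_def ns by (simp add: nu_mult nuQ)
  have eq: "(qcoeff Q (R ^ Suc j) (Suc j) - 1) * Q ^ Suc j = A + B"
    unfolding A_def B_def by (simp add: algebra_simps power_Suc2)
  have L0: "lead (R ^ j * R) (nsm j \<gamma> + \<gamma>) (Suc j)"
    using conjunct1[OF ml] by (simp only: Suc_eq_plus1)
  have L: "lead (R ^ Suc j) (nsm (Suc j) \<gamma>) (Suc j)"
    unfolding pw ns by (rule L0)
  have "Fin (nsm (Suc j) \<gamma>) < \<nu> ((qcoeff Q (R ^ Suc j) (Suc j) - 1) * Q ^ Suc j)"
    unfolding eq by (rule lt_add_min[OF A B])
  with L show ?case by (rule conjI)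
qed

lemma cR_lead:
  assumes dR: "degree (Q - R) < m" and nR: "Fin \<gamma> < \<nu> R"
    and c: "c \<noteq> 0" "degree c < m" and nc: "\<nu> c = Fin \<kappa>"
  shows "lead (c * R ^ j) (\<kappa> + nsm j \<gamma>) j \<and>
    Fin (\<kappa> + nsm j \<gamma>) < \<nu> ((qcoeff Q (c * R ^ j) j - c) * Q ^ j)"
proof -
  have lc: "lead c \<kappa> 0" by (rule lead_small[OF c nc])
  have rp: "lead (R ^ j) (nsm j \<gamma>) j \<and> Fin (nsm j \<gamma>) < \<nu> ((qcoeff Q (R ^ j) j - 1) * Q ^ j)"
    by (rule Rpow_lead[OF dR nR])
  have ml: "lead (c * R ^ j) (\<kappa> + nsm j \<gamma>) (0 + j) \<and>
    Fin (\<kappa> + nsm j \<gamma>) < \<nu> ((qcoeff Q (c * R ^ j) (0 + j) - (qcoeff Q c 0 * qcoeff Q (R ^ j) j) mod Q) * Q ^ (0 + j))"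
    using mult_lead[OF lc conjunct1[OF rp]] .
  have qc0: "qcoeff Q c 0 = c" using qcoeff_small[OF dQ1, of c 0] c degQ by simp
  define u where "u = qcoeff Q (R ^ j) j"
  have du: "degree u < m" unfolding u_def using qcoeff_degree[OF dQ1] degQ by simp
  have "Fin (0 + nsm j \<gamma>) < \<nu> (u - 1) + Fin (nsm j \<gamma>)" using rp by (simp add: u_def nu_times_Qpow)
  then have uv: "Fin 0 < \<nu> (u - 1)" by (simp only: ext_add_less_cancel flip: plus_extended.simps(1))
  have ap: "Fin \<kappa> < \<nu> ((c * u) mod Q - c)" by (rule coeff_approx_mult[OF c nc du uv])
  define A where "A = (qcoeff Q (c * R ^ j) j - (c * u) mod Q) * Q ^ j"
  define B where "B = ((c * u) mod Q - c) * Q ^ j"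
  have A: "Fin (\<kappa> + nsm j \<gamma>) < \<nu> A" using ml qc0 by (simp add: A_def u_def)
  have B: "Fin (\<kappa> + nsm j \<gamma>) < \<nu> B" unfolding B_def nu_times_Qpow using ap by (rule ext_lt_addF)
  have "(qcoeff Q (c * R ^ j) j - c) * Q ^ j = A + B" by (simp add: A_def B_def algebra_simps)
  then show ?thesis using lt_add_min[OF A B] ml by simp
qed

end

lemma nuQ_zero: "nuQ \<nu> P 0 = \<nu> 0"
  by (simp add: nuQ_def)

context kp begin

lemma main_kp:
  assumes dRm: "degree R = m" and dR: "degree (Q - R) < m" and nR: "\<nu> R = Fin \<delta>"
    and gd: "\<gamma> < \<delta>" and f: "f \<noteq> 0"
  shows "let d = degQ \<nu> Q f in
           \<nu> (qcoeff Q f d) < \<nu> (qcoeff Q f d - qcoeff R f d)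
         \<and> \<nu> (qcoeff Q f d) = \<nu> (qcoeff R f d)
         \<and> d = Max {j. nuQ \<nu> Q (qcoeff R f j * R ^ j) = nuQ \<nu> Q f}
         \<and> degQ \<nu> R f \<le> d"
proof -
  have nR': "Fin \<gamma> < \<nu> R" using nR gd by simp
  have dR1: "1 \<le> degree R" using dRm m_pos by simp
  define N where "N = degree f"
  define c where "c j = qcoeff R f j" for j
  have fexp: "f = (\<Sum>j\<le>N. c j * R ^ j)" unfolding N_def c_def by (rule qexp[OF dR1])
  have cdeg: "degree (c j) < m" for j using qcoeff_degree[OF dR1] dRm c_def by simp
  have cbeyond: "c j \<noteq> 0 \<Longrightarrow> j \<le> N" for j
    using qcoeff_beyond[OF dR1] unfolding c_def N_def by (meson not_le)
  define \<kappa> where "\<kappa> j = fin_val (\<nu> (c j))" for j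
  have nc: "c j \<noteq> 0 \<Longrightarrow> \<nu> (c j) = Fin (\<kappa> j)" for j
  proof -
    assume "c j \<noteq> 0"
    then obtain a where "\<nu> (c j) = Fin a" using small cdeg by blast
    then show ?thesis by (simp add: \<kappa>_def fin_val_def)
  qed
  define \<mu> where "\<mu> j = \<kappa> j + nsm j \<gamma>" for j
  define S0 where "S0 = {j. c j \<noteq> 0}"
  have S0fin: "finite S0"
    by (rule finite_subset[of _ "{..N}"]) (use cbeyond in \<open>auto simp: S0_def\<close>)
  have S0ne: "S0 \<noteq> {}"
  proof
    assume "S0 = {}"
    then have "c j = 0" for j by (auto simp: S0_def)
    then have "f = 0" using fexp by simp
    with f show False by simp
  qed
  define M where "M = Min (\<mu> ` S0)"
  define S where "S = {j. c j \<noteq> 0 \<and> \<mu> j = M}"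
  have "M \<in> \<mu> ` S0" unfolding M_def using S0fin S0ne by (intro Min_in) simp_all
  then have Sne: "S \<noteq> {}" by (auto simp: S_def S0_def)
  have Sfin: "finite S" by (rule finite_subset[OF _ S0fin]) (auto simp: S_def S0_def)
  define J where "J = Max S"
  have JS: "J \<in> S" unfolding J_def using Sfin Sne by (rule Max_in)
  have cJ: "c J \<noteq> 0" and muJ: "\<mu> J = M" using JS by (simp_all add: S_def)
  have JN: "J \<le> N" using cbeyond cJ by simp
  have muge: "c j \<noteq> 0 \<Longrightarrow> M \<le> \<mu> j" for j
    unfolding M_def using S0fin by (intro Min_le) (simp_all add: S0_def)
  have jS: "j \<in> S \<Longrightarrow> j \<le> J" for j unfolding J_def using Sfin by (rule Max_ge)
  define T where "T j = c j * R ^ j" for j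
  have lT: "c j \<noteq> 0 \<Longrightarrow> lead (T j) (\<mu> j) j \<and> Fin (\<mu> j) < \<nu> ((qcoeff Q (T j) j - c j) * Q ^ j)" for j
    unfolding T_def \<mu>_def using cR_lead[OF dR nR' _ cdeg nc] by blast
  have bT: "bnd (T j) M J \<and> (j \<noteq> J \<longrightarrow> Fin M < vQ (T j) J)" for j
  proof (cases "c j = 0")
    case True then show ?thesis by (simp add: T_def bnd_zero)
  next
    case False
    have l: "lead (T j) (\<mu> j) j" using lT[OF False] by simp
    then have b: "bnd (T j) (\<mu> j) j" by (simp add: lead_def)
    show ?thesis
    proof (cases "M < \<mu> j")
      case True
      then show ?thesis using bnd_lt_bnd[OF b True] bnd_lt[OF b True] by simp
    next
      case False
      then have eq: "\<mu> j = M" using muge \<open>c j \<noteq> 0\<close> by (simp add: not_less order.antisym)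
      then have "j \<in> S" using \<open>c j \<noteq> 0\<close> by (simp add: S_def)
      then have jJ: "j \<le> J" by (rule jS)
      have b2: "bnd (T j) M J" using bnd_mono[OF b _ jJ] eq by simp
      have "j \<noteq> J \<longrightarrow> Fin M < vQ (T j) J"
      proof
        assume "j \<noteq> J" then have "j < J" using jJ by simp
        then show "Fin M < vQ (T j) J" using bnd_gt[OF b] eq by simp
      qed
      then show ?thesis using b2 by simp
    qed
  qed
  have fT: "f = (\<Sum>j\<le>N. T j)" using fexp by (simp add: T_def)
  have SL: "lead f M J \<and> Fin M < \<nu> ((qcoeff Q f J - qcoeff Q (T J) J) * Q ^ J)"
    unfolding fT by (rule sum_lead) (use JN lT[OF cJ] muJ bT in auto)
  have LN: "nuQ \<nu> Q f = Fin M \<and> degQ \<nu> Q f = J" using lead_nuQ SL by blast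
  define a where "a = qcoeff Q f J"
  have X: "Fin M < \<nu> ((a - c J) * Q ^ J)"
  proof -
    have "(a - c J) * Q ^ J = (a - qcoeff Q (T J) J) * Q ^ J + (qcoeff Q (T J) J - c J) * Q ^ J"
      by (simp add: algebra_simps)
    moreover have "Fin M < \<nu> ((a - qcoeff Q (T J) J) * Q ^ J)" using SL by (simp add: a_def)
    moreover have "Fin M < \<nu> ((qcoeff Q (T J) J - c J) * Q ^ J)" using lT[OF cJ] muJ by simp
    ultimately show ?thesis using lt_add_min by simp
  qed
  have aM: "\<nu> (a * Q ^ J) = Fin M" using SL by (simp add: a_def lead_def vQ_def)
  have c1: "\<nu> a < \<nu> (a - c J)"
  proof -
    have "\<nu> a + Fin (nsm J \<gamma>) < \<nu> (a - c J) + Fin (nsm J \<gamma>)"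
      using X aM by (simp add: nu_times_Qpow)
    then show ?thesis by (simp only: ext_add_less_cancel)
  qed
  have c2: "\<nu> a = \<nu> (c J)"
  proof -
    have "\<nu> a < \<nu> (- (a - c J))" using c1 nu_diff_comm[of a "c J"] by simp
    then have "\<nu> (a + - (a - c J)) = \<nu> a" by (rule nu_add_eq)
    then show ?thesis by simp
  qed
  have setS: "{j. nuQ \<nu> Q (qcoeff R f j * R ^ j) = nuQ \<nu> Q f} = S"
  proof (rule set_eqI)
    fix j
    show "j \<in> {j. nuQ \<nu> Q (qcoeff R f j * R ^ j) = nuQ \<nu> Q f} \<longleftrightarrow> j \<in> S"
    proof (cases "c j = 0")
      case True
      then show ?thesis using LN by (simp add: c_def[symmetric] nuQ_zero nu0 S_def)
    next
      case False
      have "nuQ \<nu> Q (T j) = Fin (\<mu> j)" using lead_nuQ lT[OF False] by blast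
      then show ?thesis using LN False by (simp add: c_def[symmetric] T_def S_def)
    qed
  qed
  define V where "V i = \<nu> (qcoeff R f i * R ^ i)" for i
  have VT: "V i = \<nu> (T i)" for i by (simp add: V_def T_def c_def)
  have nRp: "\<nu> (R ^ j) = Fin (nsm j \<delta>)" for j by (rule nu_power[OF nR])
  have VJ: "V J = Fin (\<kappa> J + nsm J \<delta>)" using nc[OF cJ] by (simp add: VT T_def nu_mult nRp)
  have gt: "V J < V j" if "J < j" for j
  proof (cases "c j = 0")
    case True then show ?thesis using VJ by (simp add: VT T_def nu0)
  next
    case False
    have "j \<notin> S" using jS that by (meson not_le)
    then have "\<mu> j \<noteq> M" using False by (simp add: S_def)
    then have lt: "\<mu> J < \<mu> j" using muge[OF False] muJ by simp
    have dg: "0 \<le> \<delta> - \<gamma>" using gd by simp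
    have sp: "nsm k \<delta> = nsm k \<gamma> + nsm k (\<delta> - \<gamma>)" for k
      using nsm_plus[of k \<gamma> "\<delta> - \<gamma>"] by simp
    have "nsm J (\<delta> - \<gamma>) \<le> nsm j (\<delta> - \<gamma>)" using nsm_mono_n[OF dg, of J j] that by simp
    then have "\<kappa> J + nsm J \<delta> < \<kappa> j + nsm j \<delta>"
      using lt unfolding \<mu>_def sp by (simp add: add.assoc[symmetric] add_less_le_mono)
    moreover have "V j = Fin (\<kappa> j + nsm j \<delta>)" using nc[OF False] by (simp add: VT T_def nu_mult nRp)
    ultimately show ?thesis using VJ by simp
  qed
  have nRf: "nuQ \<nu> R f = Min (V ` {..N})" by (simp add: nuQ_def V_def N_def)
  have SR: "SQ \<nu> R f = {i. V i = Min (V ` {..N})}" by (simp add: SQ_def nRf V_def)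
  have MnJ: "Min (V ` {..N}) \<le> V J" using JN by (intro Min_le) simp_all
  have SRJ: "i \<le> J" if "i \<in> SQ \<nu> R f" for i
  proof (rule ccontr)
    assume "\<not> i \<le> J"
    then have lt: "V J < V i" using gt by simp
    have "V i = Min (V ` {..N})" using that SR by simp
    then have "V i \<le> V J" using MnJ by simp
    then have "\<not> V J < V i" by (rule leD)
    then show False using lt by simp
  qed
  have "Min (V ` {..N}) \<in> V ` {..N}" by (intro Min_in) simp_all
  then obtain i0 where "Min (V ` {..N}) = V i0" by (rule imageE)
  then have SRne: "SQ \<nu> R f \<noteq> {}" using SR by auto
  have SRfin: "finite (SQ \<nu> R f)" by (rule finite_subset[of _ "{..J}"]) (use SRJ in auto)
  have c3: "degQ \<nu> R f \<le> J" unfolding degQ_def using SRfin SRne SRJ by (rule Max.boundedI)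
  show ?thesis using c1 c2 c3 setS LN
    by (simp add: Let_def a_def c_def J_def[symmetric])
qed

end

lemma pval_of: "is_poly_valuation \<nu> \<Longrightarrow> pval \<nu>"
  unfolding is_poly_valuation_def pval_def by blast

lemma const_fin:
  assumes pv: "pval \<nu>" and g: "g \<noteq> 0" "degree g = 0"
  shows "\<exists>a. \<nu> g = Fin a"
proof -
  interpret pval \<nu> by (rule pv)
  obtain c where gc: "g = [:c:]" using g by (metis degree_eq_zeroE)
  then have c: "c \<noteq> 0" using g by simp
  have "g * [:inverse c:] = 1" using gc c by simp
  then have "\<nu> g + \<nu> [:inverse c:] = Fin 0" using nu1 nu_mult by metis
  moreover have "\<nu> g \<noteq> Minf" "\<nu> [:inverse c:] \<noteq> Minf" by (simp_all add: nu_nm)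
  ultimately show ?thesis by (cases "\<nu> g"; cases "\<nu> [:inverse c:]") simp_all
qed

lemma key_poly_kp:
  fixes \<nu> :: "'a::field poly \<Rightarrow> 'b::linordered_ab_group_add extended"
  assumes dv: "\<forall>g::'b. \<forall>n>0. \<exists>h. nsm n h = g"
    and pv: "pval \<nu>" and kq: "key_poly \<nu> Q" and dQ: "degree Q = m" and m: "1 \<le> m"
    and nQ: "\<nu> Q = Fin \<gamma>"
  shows "\<exists>e. kp \<nu> Q m \<gamma> e"
proof -
  interpret pval \<nu> by (rule pv)
  define \<phi> where "\<phi> f s = (case \<nu> (hasse s f) of
                      Fin b \<Rightarrow> Fin (divn s (fin_val (\<nu> f) - b))
                    | Pinf \<Rightarrow> Minf | Minf \<Rightarrow> Minf)" for f s
  have lev: "level \<nu> f = Max (\<phi> f ` {1..degree f})" if "degree f \<noteq> 0" "\<nu> f \<noteq> Pinf" for f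
    using that by (simp add: level_def \<phi>_def)
  have levQ: "level \<nu> Q = Max (\<phi> Q ` {1..m})" using lev[of Q] dQ m nQ by simp
  have fin: "finite (\<phi> Q ` {1..m})" "\<phi> Q ` {1..m} \<noteq> {}" using m by auto
  have "level \<nu> 1 < level \<nu> Q" using kq m dQ by (simp add: key_poly_def)
  then have lQ: "level \<nu> Q \<noteq> Minf" by (simp add: level_def)
  obtain b where b: "b \<in> {1..m}" and bmax: "\<phi> Q b = level \<nu> Q"
    using Max_in[OF fin] levQ by (metis imageE)
  obtain \<beta> where hb: "\<nu> (hasse b Q) = Fin \<beta>"
    using bmax lQ nu_nm[of "hasse b Q"] by (cases "\<nu> (hasse b Q)") (auto simp: \<phi>_def)
  define e where "e = divn b (\<gamma> - \<beta>)"
  have lQe: "level \<nu> Q = Fin e" using bmax hb nQ by (simp add: \<phi>_def e_def fin_val_def)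
  have b1: "b > 0" using b by simp
  have "nsm b e = \<gamma> - \<beta>" unfolding e_def by (rule divn_eq[OF dv b1])
  then have Qeq: "\<nu> (hasse b Q) = Fin (\<gamma> - nsm b e)" using hb by simp
  have Qle: "Fin (\<gamma> - nsm s e) \<le> \<nu> (hasse s Q)" for s
  proof (cases "s = 0")
    case True then show ?thesis using nQ by (simp add: hasse_0)
  next
    case False
    show ?thesis
    proof (cases "s \<le> m")
      case False then show ?thesis using dQ by (simp add: hasse_beyond nu0)
    next
      case True
      then have s: "s \<in> {1..m}" using \<open>s \<noteq> 0\<close> by simp
      have le: "\<phi> Q s \<le> Fin e" using Max_ge[OF fin(1), of "\<phi> Q s"] s levQ lQe by simp
      show ?thesis
      proof (cases "\<nu> (hasse s Q)")
        case (Fin \<beta>')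
        then have "divn s (\<gamma> - \<beta>') \<le> e" using le nQ by (simp add: \<phi>_def fin_val_def)
        then have "nsm s (divn s (\<gamma> - \<beta>')) \<le> nsm s e" by (rule nsm_mono)
        then have "\<gamma> - \<beta>' \<le> nsm s e" using divn_eq[OF dv, of s] \<open>s \<noteq> 0\<close> by simp
        then show ?thesis using Fin by (simp add: algebra_simps)
      qed (simp_all add: nu_nm)
    qed
  qed
  have small: "\<exists>a. \<nu> g = Fin a \<and> (\<forall>s\<ge>1. Fin (a - nsm s e) < \<nu> (hasse s g))"
    if g: "g \<noteq> 0" "degree g < m" for g
  proof (cases "degree g = 0")
    case True
    obtain a where a: "\<nu> g = Fin a" using const_fin[OF pv g(1) True] by blast
    have "\<forall>s\<ge>1. Fin (a - nsm s e) < \<nu> (hasse s g)" using True by (simp add: hasse_beyond nu0)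
    then show ?thesis using a by blast
  next
    case False
    have lg: "level \<nu> g < Fin e" using kq g lQe by (simp add: key_poly_def dQ)
    have "\<nu> g \<noteq> Pinf"
    proof
      assume "\<nu> g = Pinf"
      then have "level \<nu> g = Pinf" using False by (simp add: level_def)
      then show False using lg by simp
    qed
    then obtain a where a: "\<nu> g = Fin a" using nu_nm[of g] by (cases "\<nu> g") auto
    have levg: "level \<nu> g = Max (\<phi> g ` {1..degree g})" using lev[of g] False a by simp
    have fing: "finite (\<phi> g ` {1..degree g})" by simp
    have "Fin (a - nsm s e) < \<nu> (hasse s g)" if s: "1 \<le> s" for s
    proof (cases "s \<le> degree g")
      case False then show ?thesis by (simp add: hasse_beyond nu0)
    next
      case True
      then have sI: "s \<in> {1..degree g}" using s by simp
      have le: "\<phi> g s < Fin e" using Max_ge[OF fing, of "\<phi> g s"] sI levg lg by simp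
      show ?thesis
      proof (cases "\<nu> (hasse s g)")
        case (Fin \<beta>')
        then have "divn s (a - \<beta>') < e" using le a by (simp add: \<phi>_def fin_val_def)
        then have "nsm s (divn s (a - \<beta>')) < nsm s e" using s by (intro nsm_strict_mono) simp_all
        then have "a - \<beta>' < nsm s e" using divn_eq[OF dv, of s] s by simp
        then show ?thesis using Fin by (simp add: algebra_simps)
      qed (simp_all add: nu_nm)
    qed
    then show ?thesis using a by blast
  qed
  have "kp \<nu> Q m \<gamma> e"
    unfolding kp_def kp_axioms_def using pv dQ m nQ small Qle Qeq b by auto
  then show ?thesis by blast
qed

lemma monic_diff_deg:
  fixes Q R :: "'a::field poly"
  assumes "lead_coeff Q = 1" "lead_coeff R = 1" "degree Q = m" "degree R = m" "1 \<le> m"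
  shows "degree (Q - R) < m"
proof -
  have "degree (Q - R) \<le> m - 1"
  proof (rule degree_le, intro allI impI)
    fix i assume i: "m - 1 < i"
    show "coeff (Q - R) i = 0"
    proof (cases "i = m")
      case True then show ?thesis using assms by simp
    next
      case False then have "m < i" using i by simp
      then show ?thesis using assms by (simp add: coeff_eq_0)
    qed
  qed
  then show ?thesis using assms(5) by simp
qed

theorem mainTheorem2:
  fixes v :: "'a::field \<Rightarrow> 'b::linordered_ab_group_add extended"
    and \<nu> :: "'a poly \<Rightarrow> 'b extended"
    and m :: nat and QQ :: "'a poly set" and f Q R :: "'a poly"
  assumes divisible: "\<forall>g::'b. \<forall>n>0. \<exists>h. nsm n h = g"
    and val_v: "is_field_valuation v"
    and val_nu: "is_poly_valuation \<nu>"
    and ext: "extends_val \<nu> v"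
    and wspec: "well_specified v \<nu>"
    and m_pos: "1 \<le> m"
    and Psi_ne: "Psi \<nu> m \<noteq> {}"
    and Psi_nomax: "\<forall>P\<in>Psi \<nu> m. \<exists>P'\<in>Psi \<nu> m. \<nu> P < \<nu> P'"
    and QQ_sub: "QQ \<subseteq> Psi \<nu> m"
    and QQ_inj: "inj_on \<nu> QQ"
    and QQ_wo: "\<forall>S\<subseteq>QQ. S \<noteq> {} \<longrightarrow> (\<exists>P\<in>S. \<forall>P'\<in>S. \<nu> P \<le> \<nu> P')"
    and QQ_cof: "\<forall>P\<in>Psi \<nu> m. \<exists>P'\<in>QQ. \<nu> P \<le> \<nu> P'"
    and Q_in: "Q \<in> QQ" and R_in: "R \<in> QQ" and QR: "\<nu> Q < \<nu> R"
    and f_nz: "f \<noteq> 0"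
  shows "let d = degQ \<nu> Q f in
           \<nu> (qcoeff Q f d) < \<nu> (qcoeff Q f d - qcoeff R f d)
         \<and> \<nu> (qcoeff Q f d) = \<nu> (qcoeff R f d)
         \<and> d = Max {j. nuQ \<nu> Q (qcoeff R f j * R ^ j) = nuQ \<nu> Q f}
         \<and> degQ \<nu> R f \<le> d"
proof -
  have pv: "pval \<nu>" by (rule pval_of[OF val_nu])
  interpret pval \<nu> by (rule pv)
  have QP: "Q \<in> Psi \<nu> m" and RP: "R \<in> Psi \<nu> m" using QQ_sub Q_in R_in by auto
  then have kQ: "key_poly \<nu> Q" and dQ: "degree Q = m" and kR: "key_poly \<nu> R" and dR: "degree R = m"
    by (simp_all add: Psi_def)
  obtain P' where "P' \<in> Psi \<nu> m" "\<nu> R < \<nu> P'" using Psi_nomax RP by blast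
  then have RnP: "\<nu> R \<noteq> Pinf" by auto
  obtain \<delta> where nR: "\<nu> R = Fin \<delta>" using RnP nu_nm[of R] by (cases "\<nu> R") auto
  have "\<nu> Q \<noteq> Pinf" using QR by auto
  then obtain \<gamma> where nQ: "\<nu> Q = Fin \<gamma>" using nu_nm[of Q] by (cases "\<nu> Q") auto
  have gd: "\<gamma> < \<delta>" using QR nQ nR by simp
  obtain e where kp: "kp \<nu> Q m \<gamma> e" using key_poly_kp[OF divisible pv kQ dQ m_pos nQ] by blast
  interpret kp \<nu> Q m \<gamma> e by (rule kp)
  have dQR: "degree (Q - R) < m"
    using kQ kR dQ dR m_pos by (intro monic_diff_deg) (simp_all add: key_poly_def)
  show ?thesis by (rule main_kp[OF dR dQR nR gd f_nz])
qed

end
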